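(* Let $X$ be a real Banach space ordered by a generating and normal cone $K$. Let $A$ be a bounded linear operator on $X$ with $A(K)\subseteq K$, and suppose $A=T+F$, where $T,F$ are bounded linear operators on $X$ with $T(K)\subseteq K$, $F(K)\subseteq K$, and $r(T)<1$. Define $R_0:=r\big(F(I-T)^{-1}\big)$. Then exactly one of the following holds: (a) $R_0\ge r(A)>1$; (b) $R_0=r(A)=1$; (c) $R_0\le r(A)<1$.
   Context: A cone $K\subseteq X$ is a closed convex set such that $\alpha x\in K$ whenever $x\in K,\ \alpha\ge 0$, and such that $x\in K$, $-x\in K$ imply $x=0$. $K$ is generating if $X=K-K$, and normal if there is $\gamma>0$ such that $0\le x\le y$ implies $\|x\|\le\gamma\|y\|$, where $x\le y$ means $y-x\in K$. For a bounded operator $B$ on a real Banach space, the spectrum $\sigma(B)$ and spectral radius $r(B)=\sup\{|\lambda|:\lambda\in\sigma(B)\}$ are those of its complexification on $X+iX$. *)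

theory Defs
  imports "HOL-Analysis.Analysis"
begin

definition is_cone :: "'a::real_normed_vector set \<Rightarrow> bool" where
  "is_cone K \<longleftrightarrow> closed K \<and> convex K \<and> (\<forall>x\<in>K. \<forall>\<alpha>::real. \<alpha> \<ge> 0 \<longrightarrow> \<alpha> *\<^sub>R x \<in> K)
     \<and> (\<forall>x. x \<in> K \<and> - x \<in> K \<longrightarrow> x = 0)"

definition generating_cone :: "'a::real_normed_vector set \<Rightarrow> bool" where
  "generating_cone K \<longleftrightarrow> {x - y | x y. x \<in> K \<and> y \<in> K} = UNIV"

definition normal_cone :: "'a::real_normed_vector set \<Rightarrow> bool" where
  "normal_cone K \<longleftrightarrow> (\<exists>\<gamma>>0. \<forall>x y. x \<in> K \<and> y - x \<in> K \<longrightarrow> norm x \<le> \<gamma> * norm y)"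

text \<open>Complexification X + iX is modelled as X \<times> X, (x,y) standing for x + i y.
  For z = a + i b, (B - \<lambda> I)(x + i y) = (B x - a x + b y) + i (B y - b x - a y).\<close>
definition cplx_shift :: "('a::real_normed_vector \<Rightarrow> 'a) \<Rightarrow> complex \<Rightarrow> ('a \<times> 'a \<Rightarrow> 'a \<times> 'a)" where
  "cplx_shift B z = (\<lambda>(x, y). (B x - Re z *\<^sub>R x + Im z *\<^sub>R y, B y - Im z *\<^sub>R x - Re z *\<^sub>R y))"

definition op_spectrum :: "('a::real_normed_vector \<Rightarrow> 'a) \<Rightarrow> complex set" where
  "op_spectrum B = {z. \<not> (\<exists>S. bounded_linear S \<and> S \<circ> cplx_shift B z = id \<and> cplx_shift B z \<circ> S = id)}"

definition spectral_radius :: "('a::real_normed_vector \<Rightarrow> 'a) \<Rightarrow> real" where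
  "spectral_radius B = Sup (cmod ` op_spectrum B)"

end

theory Submission
  imports Defs
begin

locale oc =
  fixes K :: "'a::banach set"
  assumes cone: "is_cone K" and gen: "generating_cone K" and nor: "normal_cone K"
begin

lemma K_closed: "closed K" using cone by (simp add: is_cone_def)
lemma K_convex: "convex K" using cone by (simp add: is_cone_def)
lemma K_scale: "x \<in> K \<Longrightarrow> 0 \<le> c \<Longrightarrow> c *\<^sub>R x \<in> K" using cone by (simp add: is_cone_def)
lemma K_pointed: "x \<in> K \<Longrightarrow> - x \<in> K \<Longrightarrow> x = 0" using cone by (simp add: is_cone_def)
lemma K_decomp: "\<exists>u v. u \<in> K \<and> v \<in> K \<and> x = u - v"
proof -
  have "x \<in> {x - y | x y. x \<in> K \<and> y \<in> K}" using gen by (simp add: generating_cone_def)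
  then show ?thesis by blast
qed
lemma K_zero: "0 \<in> K"
proof -
  obtain u v where "u \<in> K" using K_decomp by blast
  then have "0 *\<^sub>R u \<in> K" by (rule K_scale) simp
  then show ?thesis by simp
qed
lemma K_add: "x \<in> K \<Longrightarrow> y \<in> K \<Longrightarrow> x + y \<in> K"
proof -
  assume "x \<in> K" "y \<in> K"
  then have "(1/2) *\<^sub>R x + (1/2) *\<^sub>R y \<in> K" using K_convex by (intro convexD) auto
  then have "2 *\<^sub>R ((1/2) *\<^sub>R x + (1/2) *\<^sub>R y) \<in> K" by (rule K_scale) simp
  then show ?thesis by (simp add: scaleR_add_right)
qed
lemma K_sum: "finite S \<Longrightarrow> (\<And>i. i \<in> S \<Longrightarrow> f i \<in> K) \<Longrightarrow> sum f S \<in> K"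
  by (induction S rule: finite_induct) (auto intro: K_add K_zero)
lemma K_lim: "(f \<longlongrightarrow> l) sequentially \<Longrightarrow> (\<And>n. f n \<in> K) \<Longrightarrow> l \<in> K"
  using K_closed closed_sequentially by blast
lemma K_suminf: "summable f \<Longrightarrow> (\<And>n. f n \<in> K) \<Longrightarrow> suminf f \<in> K"
  by (rule K_lim[OF summable_LIMSEQ]) (auto intro: K_sum)

lemma normal: obtains \<gamma> where "\<gamma> > 0" "\<And>x y. x \<in> K \<Longrightarrow> y - x \<in> K \<Longrightarrow> norm x \<le> \<gamma> * norm y"
  using nor unfolding normal_cone_def by blast

definition "DD = {u - v | u v. u \<in> K \<and> v \<in> K \<and> norm u \<le> 1 \<and> norm v \<le> 1}"

lemma DD_convex: "convex DD"
proof (rule convexI)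
  fix x y and a b :: real assume "x \<in> DD" "y \<in> DD" "0 \<le> a" "0 \<le> b" "a + b = 1"
  then obtain u1 v1 u2 v2 where h: "u1 \<in> K" "v1 \<in> K" "norm u1 \<le> 1" "norm v1 \<le> 1" "x = u1 - v1"
    "u2 \<in> K" "v2 \<in> K" "norm u2 \<le> 1" "norm v2 \<le> 1" "y = u2 - v2" unfolding DD_def by blast
  have "a *\<^sub>R x + b *\<^sub>R y = (a *\<^sub>R u1 + b *\<^sub>R u2) - (a *\<^sub>R v1 + b *\<^sub>R v2)"
    unfolding h(5) h(10) by (simp add: algebra_simps)
  moreover have "a *\<^sub>R u1 + b *\<^sub>R u2 \<in> K" "a *\<^sub>R v1 + b *\<^sub>R v2 \<in> K"
    using h \<open>0 \<le> a\<close> \<open>0 \<le> b\<close> by (auto intro: K_add K_scale)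
  moreover have "norm (a *\<^sub>R u1 + b *\<^sub>R u2) \<le> 1"
  proof -
    have "norm (a *\<^sub>R u1 + b *\<^sub>R u2) \<le> a * norm u1 + b * norm u2"
      using norm_triangle_ineq[of "a *\<^sub>R u1" "b *\<^sub>R u2"] \<open>0 \<le> a\<close> \<open>0 \<le> b\<close> by simp
    also have "\<dots> \<le> a * 1 + b * 1" using h \<open>0 \<le> a\<close> \<open>0 \<le> b\<close>
      by (intro add_mono mult_left_mono) auto
    finally show ?thesis using \<open>a + b = 1\<close> by simp
  qed
  moreover have "norm (a *\<^sub>R v1 + b *\<^sub>R v2) \<le> 1"
  proof -
    have "norm (a *\<^sub>R v1 + b *\<^sub>R v2) \<le> a * norm v1 + b * norm v2"
      using norm_triangle_ineq[of "a *\<^sub>R v1" "b *\<^sub>R v2"] \<open>0 \<le> a\<close> \<open>0 \<le> b\<close> by simp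
    also have "\<dots> \<le> a * 1 + b * 1" using h \<open>0 \<le> a\<close> \<open>0 \<le> b\<close>
      by (intro add_mono mult_left_mono) auto
    finally show ?thesis using \<open>a + b = 1\<close> by simp
  qed
  ultimately show "a *\<^sub>R x + b *\<^sub>R y \<in> DD" unfolding DD_def by blast
qed

lemma DD_neg: "x \<in> DD \<Longrightarrow> - x \<in> DD"
proof -
  assume "x \<in> DD"
  then obtain u v where "u \<in> K" "v \<in> K" "norm u \<le> 1" "norm v \<le> 1" "x = u - v" unfolding DD_def by blast
  then show ?thesis unfolding DD_def by (intro CollectI exI[of _ v] exI[of _ u]) auto
qed

lemma DD_cover: "\<exists>n. x \<in> (*\<^sub>R) (real (Suc n)) ` DD"
proof -
  obtain u v where uv: "u \<in> K" "v \<in> K" "x = u - v" using K_decomp by blast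
  obtain m where "norm u + norm v \<le> real m" using real_arch_simple by blast
  then have n: "norm u + norm v \<le> real (Suc m)" by simp
  define c where "c = real (Suc m)"
  have c: "c > 0" "norm u \<le> c" "norm v \<le> c" unfolding c_def using n norm_ge_zero[of u] norm_ge_zero[of v] by linarith+
  have "(1/c) *\<^sub>R u - (1/c) *\<^sub>R v \<in> DD" unfolding DD_def
    using c uv by (intro CollectI exI[of _ "(1/c) *\<^sub>R u"] exI[of _ "(1/c) *\<^sub>R v"])
      (auto intro!: K_scale simp: field_simps)
  moreover have "x = c *\<^sub>R ((1/c) *\<^sub>R u - (1/c) *\<^sub>R v)" using c uv by (simp add: algebra_simps)
  ultimately show ?thesis unfolding c_def by (intro exI[of _ m]) blast
qed

lemma ball_in_closure: "\<exists>r>0. ball 0 r \<subseteq> closure DD"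
proof -
  let ?G = "range (\<lambda>n::nat. closure ((*\<^sub>R) (real (Suc n)) ` DD))"
  have "\<exists>T\<in>?G. interior T \<noteq> {}"
  proof (rule ccontr)
    assume "\<not> ?thesis"
    then have "euclidean interior_of \<Union>?G = {}"
      by (intro Baire_category_alt) (auto simp: completely_metrizable_space_euclidean)
    moreover have "\<Union>?G = UNIV"
      using DD_cover closure_subset by fastforce
    ultimately show False by simp
  qed
  then obtain n p e where pe: "e > 0" "ball p e \<subseteq> closure ((*\<^sub>R) (real (Suc n)) ` DD)"
    by (metis (no_types, lifting) equals0I imageE mem_interior)
  define c where "c = real (Suc n)"
  have c: "c > 0" by (simp add: c_def)
  define q where "q = (1/c) *\<^sub>R p"
  have bq: "ball q (e/c) \<subseteq> closure DD"
  proof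
    fix y assume "y \<in> ball q (e/c)"
    then have "dist q y < e / c" by simp
    have "p - c *\<^sub>R y = c *\<^sub>R (q - y)" using c by (simp add: q_def algebra_simps)
    then have "dist p (c *\<^sub>R y) = c * dist q y" using c by (simp add: dist_norm)
    with \<open>dist q y < e / c\<close> c have "dist p (c *\<^sub>R y) < e" by (simp add: field_simps)
    then have "c *\<^sub>R y \<in> (*\<^sub>R) c ` closure DD"
      using pe closure_scaleR[of c DD] by (auto simp: c_def)
    then show "y \<in> closure DD" using c by auto
  qed
  have neg: "- z \<in> closure DD" if "z \<in> closure DD" for z
  proof -
    have "(*\<^sub>R) (-1) ` DD \<subseteq> DD" using DD_neg by auto
    then have "closure ((*\<^sub>R) (-1) ` DD) \<subseteq> closure DD" by (rule closure_mono)
    moreover have "- z \<in> closure ((*\<^sub>R) (-1) ` DD)" using that closure_scaleR[of "-1" DD] by force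
    ultimately show ?thesis by blast
  qed
  have "ball (0::'a) (e/c) \<subseteq> closure DD"
  proof
    fix y assume y: "y \<in> ball (0::'a) (e/c)"
    have "q + y \<in> closure DD" using bq y by (auto simp: dist_norm)
    moreover have "q - y \<in> closure DD" using bq y by (auto simp: dist_norm)
    then have "- (q - y) \<in> closure DD" by (rule neg)
    ultimately have "(1/2) *\<^sub>R (q + y) + (1/2) *\<^sub>R (- (q - y)) \<in> closure DD"
      using convex_closure[OF DD_convex] by (intro convexD) auto
    moreover have "(1/2) *\<^sub>R (q + y) + (1/2) *\<^sub>R (- (q - y)) = y"
      by (simp add: algebra_simps) (metis scaleR_add_left scaleR_one field_sum_of_halves)
    ultimately show "y \<in> closure DD" by simp
  qed
  then show ?thesis using pe c by (intro exI[of _ "e/c"]) auto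
qed

end

context oc begin

lemma ando_small:
  obtains r where "r > 0" "\<And>x. norm x < r \<Longrightarrow> \<exists>u v. u \<in> K \<and> v \<in> K \<and> x = u - v \<and> norm u \<le> 2 \<and> norm v \<le> 2"
proof -
  obtain r where r: "r > 0" "ball 0 r \<subseteq> closure DD" using ball_in_closure by blast
  have "\<exists>u v. u \<in> K \<and> v \<in> K \<and> norm u \<le> 1 \<and> norm v \<le> 1 \<and> norm (y - (u - v)) < r / 2"
    if "norm y < r" for y
  proof -
    have "y \<in> closure DD" using r that by auto
    then obtain d where "d \<in> DD" "dist d y < r/2" using r closure_approachable[of y DD]
      by (metis half_gt_zero)
    then show ?thesis unfolding DD_def by (auto simp: dist_norm norm_minus_commute) blast
  qed
  then obtain U V where UV: "\<And>y. norm y < r \<Longrightarrow> U y \<in> K \<and> V y \<in> K \<and> norm (U y) \<le> 1 \<and> norm (V y) \<le> 1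
     \<and> norm (y - (U y - V y)) < r / 2"
    by metis
  have main: "\<exists>u v. u \<in> K \<and> v \<in> K \<and> x = u - v \<and> norm u \<le> 2 \<and> norm v \<le> 2" if x: "norm x < r" for x
  proof -
    define ys where "ys = rec_nat x (\<lambda>k y. 2 *\<^sub>R (y - (U y - V y)))"
    have ys0: "ys 0 = x" and ysS: "ys (Suc k) = 2 *\<^sub>R (ys k - (U (ys k) - V (ys k)))" for k
      by (simp_all add: ys_def)
    have ysr: "norm (ys k) < r" for k
    proof (induction k)
      case 0 then show ?case using x by (simp add: ys0)
    next
      case (Suc k)
      then have "norm (ys k - (U (ys k) - V (ys k))) < r / 2" using UV by blast
      then show ?case by (simp add: ysS)
    qed
    have uk: "U (ys k) \<in> K" "V (ys k) \<in> K" "norm (U (ys k)) \<le> 1" "norm (V (ys k)) \<le> 1" for k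
      using UV ysr by blast+
    have expand: "x = (\<Sum>k<N. (1/2)^k *\<^sub>R (U (ys k) - V (ys k))) + (1/2)^N *\<^sub>R ys N" for N
    proof (induction N)
      case 0 then show ?case by (simp add: ys0)
    next
      case (Suc N)
      have "ys N = (U (ys N) - V (ys N)) + (1/2) *\<^sub>R ys (Suc N)" by (simp add: ysS)
      then have "(1/2)^N *\<^sub>R ys N = (1/2)^N *\<^sub>R (U (ys N) - V (ys N)) + ((1/2)^N * (1/2)) *\<^sub>R ys (Suc N)"
        by (metis scaleR_add_right scaleR_scaleR)
      also have "(1/2::real)^N * (1/2) = (1/2)^(Suc N)" by (simp add: power_Suc2)
      finally have e: "(1/2)^N *\<^sub>R ys N = (1/2)^N *\<^sub>R (U (ys N) - V (ys N)) + (1/2)^(Suc N) *\<^sub>R ys (Suc N)" .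
      have "x = (\<Sum>k<N. (1/2)^k *\<^sub>R (U (ys k) - V (ys k))) + ((1/2)^N *\<^sub>R (U (ys N) - V (ys N)) + (1/2)^(Suc N) *\<^sub>R ys (Suc N))"
        using Suc e by simp
      then show ?case by (simp add: add.assoc)
    qed
    have sU: "summable (\<lambda>k. (1/2::real)^k *\<^sub>R U (ys k))"
      by (rule summable_comparison_test'[where g="\<lambda>k. (1/2::real)^k"])
         (use uk in \<open>auto intro: summable_geometric simp: mult_le_one\<close>)
    have sV: "summable (\<lambda>k. (1/2::real)^k *\<^sub>R V (ys k))"
      by (rule summable_comparison_test'[where g="\<lambda>k. (1/2::real)^k"])
         (use uk in \<open>auto intro: summable_geometric simp: mult_le_one\<close>)
    define u where "u = (\<Sum>k. (1/2::real)^k *\<^sub>R U (ys k))"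
    define v where "v = (\<Sum>k. (1/2::real)^k *\<^sub>R V (ys k))"
    have "u \<in> K" unfolding u_def by (rule K_suminf[OF sU]) (use uk in \<open>auto intro: K_scale\<close>)
    moreover have "v \<in> K" unfolding v_def by (rule K_suminf[OF sV]) (use uk in \<open>auto intro: K_scale\<close>)
    moreover have "norm u \<le> 2"
    proof -
      have s2: "summable (\<lambda>k. (1/2::real)^k)" by (rule summable_geometric) simp
      have "norm u \<le> (\<Sum>k. (1/2::real)^k)" unfolding u_def
        by (rule norm_suminf_le[OF _ s2]) (use uk in \<open>auto simp: mult_le_one\<close>)
      also have "\<dots> = 2" using suminf_geometric[of "1/2::real"] by simp
      finally show ?thesis .
    qed
    moreover have "norm v \<le> 2"
    proof -
      have s2: "summable (\<lambda>k. (1/2::real)^k)" by (rule summable_geometric) simp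
      have "norm v \<le> (\<Sum>k. (1/2::real)^k)" unfolding v_def
        by (rule norm_suminf_le[OF _ s2]) (use uk in \<open>auto simp: mult_le_one\<close>)
      also have "\<dots> = 2" using suminf_geometric[of "1/2::real"] by simp
      finally show ?thesis .
    qed
    moreover have "x = u - v"
    proof -
      have l1: "(\<lambda>N. \<Sum>k<N. (1/2::real)^k *\<^sub>R (U (ys k) - V (ys k))) \<longlonglongrightarrow> u - v"
        unfolding u_def v_def scaleR_diff_right sum_subtractf
        by (intro tendsto_diff summable_LIMSEQ sU sV)
      have l2: "(\<lambda>N. (1/2::real)^N *\<^sub>R ys N) \<longlonglongrightarrow> 0"
      proof (rule Lim_null_comparison[where g="\<lambda>N. r * (1/2::real)^N"])
        show "\<forall>\<^sub>F N in sequentially. norm ((1/2::real)^N *\<^sub>R ys N) \<le> r * (1/2)^N"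
          using ysr by (auto intro!: always_eventually simp: mult.commute less_imp_le)
        show "(\<lambda>N. r * (1/2::real)^N) \<longlonglongrightarrow> 0"
          by (intro tendsto_mult_right_zero LIMSEQ_power_zero) simp_all
      qed
      have "(\<lambda>N. (\<Sum>k<N. (1/2::real)^k *\<^sub>R (U (ys k) - V (ys k))) + (1/2)^N *\<^sub>R ys N) \<longlonglongrightarrow> (u - v) + 0"
        by (intro tendsto_add l1 l2)
      then have "(\<lambda>N. x) \<longlonglongrightarrow> u - v" using expand by simp
      then show ?thesis using LIMSEQ_const_iff by blast
    qed
    ultimately show ?thesis by blast
  qed
  show ?thesis using r(1) main that by blast
qed

lemma ando:
  obtains M where "M > 0" "\<And>x. \<exists>u v. u \<in> K \<and> v \<in> K \<and> x = u - v \<and> norm u \<le> M * norm x \<and> norm v \<le> M * norm x"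
proof -
  obtain r where r: "r > 0" "\<And>x. norm x < r \<Longrightarrow> \<exists>u v. u \<in> K \<and> v \<in> K \<and> x = u - v \<and> norm u \<le> 2 \<and> norm v \<le> 2"
    using ando_small by blast
  have "\<exists>u v. u \<in> K \<and> v \<in> K \<and> x = u - v \<and> norm u \<le> (4/r) * norm x \<and> norm v \<le> (4/r) * norm x" for x
  proof (cases "x = 0")
    case True then show ?thesis using K_zero by (intro exI[of _ 0]) auto
  next
    case False
    define c where "c = r / (2 * norm x)"
    have c: "c > 0" using False r by (simp add: c_def)
    have "norm (c *\<^sub>R x) = r / 2" using False r by (simp add: c_def)
    then have "norm (c *\<^sub>R x) < r" using r by simp
    then obtain u v where uv: "u \<in> K" "v \<in> K" "c *\<^sub>R x = u - v" "norm u \<le> 2" "norm v \<le> 2" using r by blast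
    have "x = (1/c) *\<^sub>R u - (1/c) *\<^sub>R v" using uv(3) c
      by (metis scaleR_diff_right scaleR_scaleR divide_self_if less_irrefl nonzero_divide_eq_eq
          scaleR_one times_divide_eq_left)
    moreover have "(1/c) *\<^sub>R u \<in> K" "(1/c) *\<^sub>R v \<in> K" using uv c by (auto intro: K_scale)
    moreover have "1/c = (2/r) * norm x" using c False r by (simp add: c_def)
    then have "norm ((1/c) *\<^sub>R u) \<le> (4/r) * norm x" "norm ((1/c) *\<^sub>R v) \<le> (4/r) * norm x"
      using uv c r by (auto simp: field_simps intro!: mult_left_mono[of _ 2, THEN order.trans])
    ultimately show ?thesis by blast
  qed
  then show ?thesis using r that[of "4/r"] by simp
qed

end

lemma blin_funpow: "bounded_linear (B::'a::real_normed_vector \<Rightarrow> 'a) \<Longrightarrow> bounded_linear (B ^^ n)"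
proof (induction n)
  case 0 show ?case unfolding funpow_simps_right(1) id_def by (rule bounded_linear_ident)
next
  case (Suc n) then show ?case by (simp add: bounded_linear_compose)
qed

lemma funpow_bound:
  fixes B :: "'a::real_normed_vector \<Rightarrow> 'a"
  assumes "bounded_linear B"
  obtains c where "c > 0" "\<And>x n. norm ((B ^^ n) x) \<le> c ^ n * norm x"
proof -
  obtain c where c: "c > 0" "\<And>x. norm (B x) \<le> norm x * c"
    using bounded_linear.pos_bounded[OF assms] by blast
  have "norm ((B ^^ n) x) \<le> c ^ n * norm x" for x n
  proof (induction n)
    case 0 then show ?case by simp
  next
    case (Suc n)
    have "norm ((B ^^ Suc n) x) \<le> norm ((B ^^ n) x) * c" using c(2) by simp
    also have "\<dots> \<le> c ^ n * norm x * c" using Suc c(1) by (intro mult_right_mono) auto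
    finally show ?case by (simp add: algebra_simps)
  qed
  then show ?thesis using that c(1) by blast
qed

lemma neumann:
  fixes E :: "'b::banach \<Rightarrow> 'b"
  assumes E: "bounded_linear E" and q: "0 \<le> q" "q < 1" and C: "0 \<le> C"
    and bd: "\<And>v n. norm ((E ^^ n) v) \<le> C * q ^ n * norm v"
  defines "S \<equiv> \<lambda>v. \<Sum>n. (E ^^ n) v"
  shows "\<And>v. summable (\<lambda>n. (E ^^ n) v)" "bounded_linear S" "\<And>v. S (v - E v) = v"
    "\<And>v. S v - E (S v) = v" "\<And>v. norm (S v) \<le> C / (1 - q) * norm v"
proof -
  have gs: "summable (\<lambda>n. C * norm v * q ^ n)" for v
    using q by (intro summable_mult summable_geometric) auto
  show sm: "summable (\<lambda>n. (E ^^ n) v)" for v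
    by (rule summable_comparison_test'[OF gs, of 0]) (use bd in \<open>simp add: algebra_simps\<close>)
  have gsum: "(\<Sum>n. C * norm v * q ^ n) = C * norm v / (1 - q)" for v
    using q by (simp add: suminf_mult suminf_geometric)
  show nb: "norm (S v) \<le> C / (1 - q) * norm v" for v
  proof -
    have "norm (S v) \<le> (\<Sum>n. C * norm v * q ^ n)" unfolding S_def
      by (rule norm_suminf_le[OF _ gs]) (use bd in \<open>simp add: algebra_simps\<close>)
    then show ?thesis using gsum[of v] by (simp add: field_simps)
  qed
  have lin: "linear (E ^^ n)" for n using blin_funpow[OF E] bounded_linear.linear by blast
  show "bounded_linear S"
  proof (rule bounded_linear_intro[where K="C / (1 - q)"])
    fix x y
    show "S (x + y) = S x + S y" unfolding S_def
      using suminf_add[OF sm[of x] sm[of y]] linear_add[OF lin] by simp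
  next
    fix r x
    show "S (r *\<^sub>R x) = r *\<^sub>R S x" unfolding S_def
      using suminf_scaleR_right[OF sm[of x], of r] linear_scale[OF lin] by simp
  next
    fix x show "norm (S x) \<le> norm x * (C / (1 - q))" using nb[of x] by (simp add: mult.commute)
  qed
  have tz: "(\<lambda>n. (E ^^ n) v) \<longlonglongrightarrow> 0" for v
    using summable_LIMSEQ_zero[OF sm] .
  have tele: "(\<lambda>n. (E ^^ n) v - (E ^^ Suc n) v) sums v" for v
  proof -
    have "(\<lambda>n. (- (E ^^ Suc n) v) - (- (E ^^ n) v)) sums (0 - (- (E ^^ 0) v))"
      by (rule telescope_sums) (use tendsto_minus[OF tz[of v]] in simp)
    then show ?thesis by simp
  qed
  show "S (v - E v) = v" for v
  proof -
    have "(E ^^ n) (v - E v) = (E ^^ n) v - (E ^^ Suc n) v" for n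
      using linear_diff[OF lin] by (simp add: funpow_swap1)
    then have "(\<lambda>n. (E ^^ n) (v - E v)) sums v" using tele[of v] by simp
    then show ?thesis unfolding S_def using sums_unique by metis
  qed
  show "S v - E (S v) = v" for v
  proof -
    have e1: "(E ^^ n) (E v) = (E ^^ Suc n) v" for n by (simp add: funpow_swap1)
    have sm2: "summable (\<lambda>n. (E ^^ Suc n) v)" using sm[of "E v"] e1 by simp
    have "E (S v) = (\<Sum>n. E ((E ^^ n) v))" unfolding S_def
      by (rule bounded_linear.suminf[OF E sm])
    also have "\<dots> = (\<Sum>n. (E ^^ Suc n) v)" by simp
    finally have "S v - E (S v) = (\<Sum>n. (E ^^ n) v) - (\<Sum>n. (E ^^ Suc n) v)" unfolding S_def by simp
    also have "\<dots> = (\<Sum>n. (E ^^ n) v - (E ^^ Suc n) v)" using suminf_diff[OF sm[of v] sm2] by simp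
    also have "\<dots> = v" using sums_unique[OF tele[of v]] by simp
    finally show ?thesis .
  qed
qed

lemma pert:
  fixes L R E :: "'b::banach \<Rightarrow> 'b"
  assumes L: "linear L" and R: "bounded_linear R" and E: "bounded_linear E"
    and RL: "\<And>x. R (L x) = x" and LR: "\<And>x. L (R x) = x"
    and q: "0 \<le> q" "q \<le> 1/2" and bd: "\<And>x. norm (R (E x)) \<le> q * norm x"
  defines "R' \<equiv> \<lambda>x. \<Sum>n. ((\<lambda>y. R (E y)) ^^ n) (R x)"
  shows "bounded_linear R'" "\<And>x. R' (L x - E x) = x" "\<And>x. L (R' x) - E (R' x) = x"
    "\<And>x. norm (R' x - R x) \<le> 2 * q * norm (R x)"
    "\<And>x. summable (\<lambda>n. ((\<lambda>y. R (E y)) ^^ n) (R x))"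
proof -
  define F0 where "F0 = (\<lambda>y. R (E y))"
  have F0: "bounded_linear F0" unfolding F0_def using bounded_linear_compose[OF R E] by (simp add: o_def)
  have bdn: "norm ((F0 ^^ n) v) \<le> 1 * q ^ n * norm v" for v n
  proof (induction n)
    case 0 then show ?case by simp
  next
    case (Suc n)
    have "norm ((F0 ^^ Suc n) v) \<le> q * norm ((F0 ^^ n) v)" using bd by (simp add: F0_def)
    also have "\<dots> \<le> q * (1 * q ^ n * norm v)" using Suc q by (intro mult_left_mono) auto
    finally show ?case by simp
  qed
  note N = neumann[OF F0 q(1) _ _ bdn, simplified]
  have q1: "q < 1" using q by simp
  define S where "S = (\<lambda>v. \<Sum>n. (F0 ^^ n) v)"
  have S: "bounded_linear S" "\<And>v. S (v - F0 v) = v" "\<And>v. S v - F0 (S v) = v"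
    "\<And>v. norm (S v) \<le> 1 / (1 - q) * norm v"
    using N q1 unfolding S_def by auto
  have R'S: "R' = (\<lambda>x. S (R x))" unfolding R'_def S_def F0_def by simp
  show "summable (\<lambda>n. ((\<lambda>y. R (E y)) ^^ n) (R x))" for x using N(1) q1 unfolding F0_def by auto
  show "bounded_linear R'" unfolding R'S using bounded_linear_compose[OF S(1) R] by (simp add: o_def)
  have linR: "linear R" using R bounded_linear.linear by blast
  show "R' (L x - E x) = x" for x
  proof -
    have "R (L x - E x) = x - F0 x" using linear_diff[OF linR] RL by (simp add: F0_def)
    then show ?thesis unfolding R'S using S(2) by simp
  qed
  show "L (R' x) - E (R' x) = x" for x
  proof -
    define y where "y = S (R x)"
    have "y - F0 y = R x" using S(3) by (simp add: y_def)
    have "L y = L (y - F0 y) + L (F0 y)" using linear_add[OF L, of "y - F0 y" "F0 y"] by simp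
    also have "\<dots> = x + E y" using \<open>y - F0 y = R x\<close> LR by (simp add: F0_def)
    finally show ?thesis unfolding R'S y_def[symmetric] by simp
  qed
  show "norm (R' x - R x) \<le> 2 * q * norm (R x)" for x
  proof -
    define y where "y = S (R x)"
    have "R' x - R x = F0 y" using S(3)[of "R x"] unfolding R'S y_def by (simp add: algebra_simps)
    then have "norm (R' x - R x) \<le> q * norm y" using bd by (simp add: F0_def)
    also have "\<dots> \<le> q * (1 / (1 - q) * norm (R x))" using S(4)[of "R x"] q by (intro mult_left_mono) (auto simp: y_def)
    also have "\<dots> \<le> q * (2 * norm (R x))"
    proof -
      have "1 / (1 - q) \<le> 2" using q by (simp add: field_simps)
      then show ?thesis using q by (intro mult_left_mono mult_right_mono) auto
    qed
    finally show ?thesis by simp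
  qed
qed

context oc begin

definition pos :: "('a \<Rightarrow> 'a) \<Rightarrow> bool" where "pos B \<longleftrightarrow> bounded_linear B \<and> (\<forall>x\<in>K. B x \<in> K)"
definition NB :: "('a \<Rightarrow> 'a) \<Rightarrow> real \<Rightarrow> bool" where
  "NB B l \<longleftrightarrow> (\<exists>C\<ge>0. \<forall>x\<in>K. \<forall>n. norm ((B ^^ n) x) \<le> C * l ^ n * norm x)"
definition PP :: "('a \<Rightarrow> 'a) \<Rightarrow> real \<Rightarrow> bool" where
  "PP B l \<longleftrightarrow> (\<exists>R. bounded_linear R \<and> (\<forall>x. R (l *\<^sub>R x - B x) = x) \<and> (\<forall>x. l *\<^sub>R R x - B (R x) = x) \<and> (\<forall>x\<in>K. R x \<in> K))"
definition rho :: "('a \<Rightarrow> 'a) \<Rightarrow> real" where "rho B = Inf {m. m > 0 \<and> NB B m}"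

lemma pos_funpow: "pos B \<Longrightarrow> x \<in> K \<Longrightarrow> (B ^^ n) x \<in> K"
  by (induction n) (auto simp: pos_def)

lemma pos_lin: "pos B \<Longrightarrow> linear B" by (simp add: pos_def bounded_linear.linear)
lemma pos_linn: "pos B \<Longrightarrow> linear (B ^^ n)" using blin_funpow bounded_linear.linear pos_def by blast

lemma NB_all:
  assumes "pos B" "NB B m" "m > 0"
  obtains C where "C \<ge> 0" "\<And>x n. norm ((B ^^ n) x) \<le> C * m ^ n * norm x"
proof -
  obtain C where C: "C \<ge> 0" "\<And>x n. x \<in> K \<Longrightarrow> norm ((B ^^ n) x) \<le> C * m ^ n * norm x"
    using assms(2) NB_def by auto
  obtain M where M: "M > 0" "\<And>x. \<exists>u v. u \<in> K \<and> v \<in> K \<and> x = u - v \<and> norm u \<le> M * norm x \<and> norm v \<le> M * norm x"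
    using ando by blast
  have "norm ((B ^^ n) x) \<le> (2 * M * C) * m ^ n * norm x" for x n
  proof -
    obtain u v where uv: "u \<in> K" "v \<in> K" "x = u - v" "norm u \<le> M * norm x" "norm v \<le> M * norm x"
      using M(2) by blast
    have "(B ^^ n) x = (B ^^ n) u - (B ^^ n) v" using uv(3) linear_diff[OF pos_linn[OF assms(1)]] by simp
    then have "norm ((B ^^ n) x) \<le> norm ((B ^^ n) u) + norm ((B ^^ n) v)" by (simp add: norm_triangle_ineq4)
    also have "\<dots> \<le> C * m ^ n * norm u + C * m ^ n * norm v" using C uv by (intro add_mono) auto
    also have "\<dots> \<le> C * m ^ n * (M * norm x) + C * m ^ n * (M * norm x)"
      using uv C assms(3) by (intro add_mono mult_left_mono) auto
    finally show ?thesis by (simp add: algebra_simps)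
  qed
  then show ?thesis using that[of "2*M*C"] M(1) C(1) by simp
qed

lemma NB_mono: assumes "NB B m" "0 \<le> m" "m \<le> l" shows "NB B l"
proof -
  obtain C where C: "0 \<le> C" "\<forall>x\<in>K. \<forall>n. norm ((B ^^ n) x) \<le> C * m ^ n * norm x"
    using assms(1) NB_def by auto
  have "norm ((B ^^ n) x) \<le> C * l ^ n * norm x" if "x \<in> K" for x n
  proof -
    have "C * m ^ n * norm x \<le> C * l ^ n * norm x"
      using C assms by (intro mult_right_mono mult_left_mono power_mono) auto
    then show ?thesis using C that by (meson order.trans)
  qed
  then show ?thesis unfolding NB_def using C(1) by blast
qed

lemma NB_exists: "pos B \<Longrightarrow> \<exists>m>0. NB B m"
proof -
  assume "pos B"
  then obtain c where "c > 0" "\<And>x n. norm ((B ^^ n) x) \<le> c ^ n * norm x"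
    using funpow_bound pos_def by blast
  then show ?thesis unfolding NB_def by (intro exI[of _ c] conjI exI[of _ 1]) auto
qed

lemma NS:
  assumes B: "pos B" and NB: "NB B m" and m: "0 < m" "m < l"
  shows "PP B l"
proof -
  obtain C where C: "C \<ge> 0" "\<And>x n. norm ((B ^^ n) x) \<le> C * m ^ n * norm x"
    using NB_all[OF B NB m(1)] by blast
  have l: "l > 0" using m by simp
  have linB: "linear B" using pos_lin[OF B] .
  define E where "E = (\<lambda>x. (1/l) *\<^sub>R B x)"
  have E: "bounded_linear E" unfolding E_def
    using bounded_linear_compose[OF bounded_linear_scaleR_right[of "1/l"], of B] B by (simp add: pos_def o_def)
  have EB: "(E ^^ n) x = (1/l)^n *\<^sub>R (B ^^ n) x" for n x
  proof (induction n)
    case 0 then show ?case by simp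
  next
    case (Suc n) then show ?case by (simp add: E_def linear_scale[OF linB])
  qed
  have bd: "norm ((E ^^ n) x) \<le> C * (m/l) ^ n * norm x" for n x
  proof -
    have "norm ((E ^^ n) x) = (1/l)^n * norm ((B ^^ n) x)" using l by (simp add: EB)
    also have "\<dots> \<le> (1/l)^n * (C * m ^ n * norm x)" using C l by (intro mult_left_mono) auto
    also have "\<dots> = C * (m/l) ^ n * norm x" by (simp add: power_divide)
    finally show ?thesis .
  qed
  have q: "0 \<le> m/l" "m/l < 1" using m by auto
  note N = neumann[OF E q C(1) bd]
  define S where "S = (\<lambda>v. \<Sum>n. (E ^^ n) v)"
  have S: "\<And>v. summable (\<lambda>n. (E ^^ n) v)" "bounded_linear S" "\<And>v. S (v - E v) = v" "\<And>v. S v - E (S v) = v"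
    using N unfolding S_def by auto
  define R where "R = (\<lambda>x. (1/l) *\<^sub>R S x)"
  have "bounded_linear R" unfolding R_def
    using bounded_linear_compose[OF bounded_linear_scaleR_right[of "1/l"] S(2)] by (simp add: o_def)
  moreover have "R (l *\<^sub>R x - B x) = x" for x
  proof -
    have "l *\<^sub>R x - B x = l *\<^sub>R (x - E x)" using l by (simp add: E_def algebra_simps)
    then have "S (l *\<^sub>R x - B x) = l *\<^sub>R x" using S(3) linear_scale[OF bounded_linear.linear[OF S(2)]] by simp
    then show ?thesis using l by (simp add: R_def)
  qed
  moreover have "l *\<^sub>R R x - B (R x) = x" for x
  proof -
    have "B (R x) = E (S x)" by (simp add: R_def E_def linear_scale[OF linB])
    then show ?thesis using S(4)[of x] l by (simp add: R_def)
  qed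
  moreover have "R x \<in> K" if "x \<in> K" for x
  proof -
    have "S x \<in> K" unfolding S_def
      by (rule K_suminf[OF S(1)]) (use that pos_funpow[OF B] l in \<open>auto simp: EB intro!: K_scale\<close>)
    then show ?thesis using l by (simp add: R_def K_scale)
  qed
  ultimately show ?thesis unfolding PP_def by blast
qed

lemma PS:
  assumes B: "pos B" and P: "PP B l" and l: "l > 0"
  shows "NB B l"
proof -
  obtain R where R: "bounded_linear R" "\<And>x. R (l *\<^sub>R x - B x) = x" "\<And>x. l *\<^sub>R R x - B (R x) = x" "\<And>x. x \<in> K \<Longrightarrow> R x \<in> K"
    using P unfolding PP_def by blast
  obtain g where g: "g > 0" "\<And>x y. x \<in> K \<Longrightarrow> y - x \<in> K \<Longrightarrow> norm x \<le> g * norm y" using normal by blast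
  obtain cR where cR: "cR > 0" "\<And>x. norm (R x) \<le> norm x * cR" using bounded_linear.pos_bounded[OF R(1)] by blast
  have Rx: "R x = (1/l) *\<^sub>R (x + B (R x))" for x
  proof -
    have "x + B (R x) = l *\<^sub>R R x" using R(3)[of x] by (metis diff_add_cancel)
    then show ?thesis using l by simp
  qed
  have iden: "R x - (\<Sum>n<N. (1/l)^(Suc n) *\<^sub>R (B ^^ n) x) = (1/l)^N *\<^sub>R (B ^^ N) (R x)" for x N
  proof (induction N)
    case 0 then show ?case by simp
  next
    case (Suc N)
    have "(B ^^ N) (R x) = (B ^^ N) ((1/l) *\<^sub>R (x + B (R x)))" using Rx[of x] by simp
    also have "\<dots> = (1/l) *\<^sub>R ((B ^^ N) x + (B ^^ N) (B (R x)))"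
      using linear_scale[OF pos_linn[OF B]] linear_add[OF pos_linn[OF B]] by simp
    also have "(B ^^ N) (B (R x)) = (B ^^ Suc N) (R x)" by (simp add: funpow_swap1)
    finally have "(B ^^ N) (R x) = (1/l) *\<^sub>R ((B ^^ N) x + (B ^^ Suc N) (R x))" .
    then have "(1/l)^N *\<^sub>R (B ^^ N) (R x) = ((1/l)^N * (1/l)) *\<^sub>R (B ^^ N) x + ((1/l)^N * (1/l)) *\<^sub>R (B ^^ Suc N) (R x)"
      by (metis scaleR_add_right scaleR_scaleR)
    moreover have pw: "(1/l::real)^N * (1/l) = (1/l)^(Suc N)" by (rule power_Suc2[symmetric])
    ultimately have eq: "(1/l)^N *\<^sub>R (B ^^ N) (R x) = (1/l)^(Suc N) *\<^sub>R (B ^^ N) x + (1/l)^(Suc N) *\<^sub>R (B ^^ Suc N) (R x)"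
      by simp
    have "R x - (\<Sum>n<Suc N. (1/l)^(Suc n) *\<^sub>R (B ^^ n) x) = (R x - (\<Sum>n<N. (1/l)^(Suc n) *\<^sub>R (B ^^ n) x)) - (1/l)^(Suc N) *\<^sub>R (B ^^ N) x"
      by (simp add: algebra_simps)
    also have "\<dots> = (1/l)^(Suc N) *\<^sub>R (B ^^ Suc N) (R x)" unfolding Suc.IH eq by simp
    finally show ?case .
  qed
  have "norm ((B ^^ N) x) \<le> (g * cR * l) * l ^ N * norm x" if x: "x \<in> K" for x N
  proof -
    have "R x - (1/l)^(Suc N) *\<^sub>R (B ^^ N) x = (\<Sum>n<N. (1/l)^(Suc n) *\<^sub>R (B ^^ n) x) + (1/l)^(Suc N) *\<^sub>R (B ^^ Suc N) (R x)"
      using iden[of x "Suc N"] by (simp add: algebra_simps)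
    also have "\<dots> \<in> K" using x l R(4) pos_funpow[OF B] B[unfolded pos_def]
      by (intro K_add K_sum K_scale) auto
    finally have "R x - (1/l)^(Suc N) *\<^sub>R (B ^^ N) x \<in> K" .
    moreover have "(1/l)^(Suc N) *\<^sub>R (B ^^ N) x \<in> K" using x l pos_funpow[OF B] by (intro K_scale) auto
    ultimately have "norm ((1/l)^(Suc N) *\<^sub>R (B ^^ N) x) \<le> g * norm (R x)" using g by blast
    moreover have "norm ((1/l)^(Suc N) *\<^sub>R (B ^^ N) x) = (1/l)^(Suc N) * norm ((B ^^ N) x)" using l by simp
    moreover have "g * norm (R x) \<le> g * (norm x * cR)" using cR(2)[of x] g(1) by (intro mult_left_mono) auto
    ultimately have "(1/l)^(Suc N) * norm ((B ^^ N) x) \<le> g * (norm x * cR)" by linarith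
    then have "norm ((B ^^ N) x) \<le> l^(Suc N) * (g * (norm x * cR))"
      using l by (simp add: field_simps power_divide)
    then show ?thesis by (simp add: algebra_simps)
  qed
  then show ?thesis unfolding NB_def using g cR l by (intro exI[of _ "g * cR * l"]) auto
qed

lemma Dn:
  assumes B: "pos B" and P: "PP B l" and l: "l > 0"
  shows "\<exists>l'. 0 < l' \<and> l' < l \<and> PP B l'"
proof -
  obtain R where R: "bounded_linear R" "\<And>x. R (l *\<^sub>R x - B x) = x" "\<And>x. l *\<^sub>R R x - B (R x) = x" "\<And>x. x \<in> K \<Longrightarrow> R x \<in> K"
    using P unfolding PP_def by blast
  obtain cR where cR: "cR > 0" "\<And>x. norm (R x) \<le> norm x * cR" using bounded_linear.pos_bounded[OF R(1)] by blast
  define d where "d = min (l/2) (1/(2*cR))"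
  have d: "d > 0" "d \<le> l/2" "d * cR \<le> 1/2" using l cR by (auto simp: d_def min_def field_simps)
  define L where "L = (\<lambda>x. l *\<^sub>R x - B x)"
  have L: "linear L" unfolding L_def using B unfolding pos_def
    by (intro bounded_linear.linear bounded_linear_sub bounded_linear_scaleR_right) auto
  have bd: "norm (R (d *\<^sub>R x)) \<le> (d * cR) * norm x" for x
    using cR(2)[of x] d linear_scale[OF bounded_linear.linear[OF R(1)]] by (simp add: mult_left_mono algebra_simps)
  have RL: "\<And>x. R (L x) = x" and LR: "\<And>x. L (R x) = x" using R(2,3) by (simp_all add: L_def)
  have q0: "0 \<le> d * cR" using d cR by simp
  note PT = pert[OF L R(1) bounded_linear_scaleR_right[of d], of "d * cR", OF RL LR q0 d(3) bd]
  define R' where "R' = (\<lambda>x. \<Sum>n. ((\<lambda>y. R (d *\<^sub>R y)) ^^ n) (R x))"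
  have "bounded_linear R'" "\<And>x. R' ((l - d) *\<^sub>R x - B x) = x" "\<And>x. (l - d) *\<^sub>R R' x - B (R' x) = x"
    using PT d cR unfolding R'_def L_def by (auto simp: algebra_simps)
  moreover have "R' x \<in> K" if "x \<in> K" for x
  proof -
    have it: "((\<lambda>y. R (d *\<^sub>R y)) ^^ n) z \<in> K" if "z \<in> K" for n z
      using that by (induction n) (auto intro!: R(4) K_scale simp: less_imp_le d)
    show ?thesis unfolding R'_def
      by (rule K_suminf) (use PT d cR it R(4) that in auto)
  qed
  ultimately have "PP B (l - d)" unfolding PP_def by blast
  then show ?thesis using d by (intro exI[of _ "l - d"]) auto
qed

end

definition mulc :: "complex \<Rightarrow> 'a::real_normed_vector \<times> 'a \<Rightarrow> 'a \<times> 'a" where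
  "mulc w = (\<lambda>(x,y). (Re w *\<^sub>R x - Im w *\<^sub>R y, Im w *\<^sub>R x + Re w *\<^sub>R y))"
definition cx :: "('a \<Rightarrow> 'a) \<Rightarrow> 'a \<times> 'a \<Rightarrow> 'a \<times> 'a" where "cx B = (\<lambda>(x,y). (B x, B y))"

lemma shift_eq: "cplx_shift B z v = cx B v - mulc z v"
  by (cases v) (simp add: cplx_shift_def cx_def mulc_def algebra_simps)
lemma mulc_mult: "mulc a (mulc b v) = mulc (a*b) v"
  by (cases v) (simp add: mulc_def algebra_simps)
lemma mulc_one: "mulc 1 v = v" by (cases v) (simp add: mulc_def)
lemma mulc_cx: "linear B \<Longrightarrow> mulc w (cx B v) = cx B (mulc w v)"
  by (cases v) (simp add: mulc_def cx_def linear_diff linear_add linear_scale)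
lemma mulc_bl: "bounded_linear (mulc w :: 'a::real_normed_vector \<times> 'a \<Rightarrow> _)"
proof -
  have eq: "mulc w = (\<lambda>v. (Re w *\<^sub>R fst v - Im w *\<^sub>R snd v, Im w *\<^sub>R fst v + Re w *\<^sub>R snd v))"
    by (auto simp: mulc_def)
  show ?thesis unfolding eq
    by (intro bounded_linear_Pair bounded_linear_sub bounded_linear_add
        bounded_linear_compose[OF bounded_linear_scaleR_right, unfolded o_def] bounded_linear_fst bounded_linear_snd)
qed
lemma mulc_lin: "linear (mulc w :: 'a::real_normed_vector \<times> 'a \<Rightarrow> _)"
  using mulc_bl bounded_linear.linear by blast
lemma cx_bl: "bounded_linear B \<Longrightarrow> bounded_linear (cx B)"
proof -
  assume B: "bounded_linear B"
  have eq: "cx B = (\<lambda>v. (B (fst v), B (snd v)))" by (auto simp: cx_def)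
  show ?thesis unfolding eq
    by (intro bounded_linear_Pair bounded_linear_compose[OF B, unfolded o_def] bounded_linear_fst bounded_linear_snd)
qed
lemma cx_comp: "cx B (cx C v) = cx (\<lambda>x. B (C x)) v" by (cases v) (simp add: cx_def)
lemma cx_pow: "(cx B ^^ n) v = cx (B ^^ n) v"
  by (induction n arbitrary: v) (auto simp: cx_def cx_comp split: prod.splits)

lemma norm_fst_le': "norm x \<le> norm (x, y)"
  by (simp add: norm_Pair real_le_rsqrt)
lemma norm_snd_le': "norm y \<le> norm (x, y)"
  by (simp add: norm_Pair real_le_rsqrt)

lemma norm_mulc: "norm (mulc w v) \<le> 2 * cmod w * norm v"
proof (cases v)
  case (Pair x y)
  have n1: "norm (Re w *\<^sub>R a, Im w *\<^sub>R a) = cmod w * norm a" for a :: 'a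
  proof -
    have "norm (Re w *\<^sub>R a, Im w *\<^sub>R a) = sqrt (((Re w)\<^sup>2 + (Im w)\<^sup>2) * (norm a)\<^sup>2)"
      by (simp add: norm_Pair power_mult_distrib algebra_simps)
    also have "\<dots> = cmod w * norm a" by (simp add: real_sqrt_mult cmod_def)
    finally show ?thesis .
  qed
  have "mulc w v = (Re w *\<^sub>R x, Im w *\<^sub>R x) + (- Im w *\<^sub>R y, Re w *\<^sub>R y)"
    by (simp add: Pair mulc_def)
  then have "norm (mulc w v) \<le> norm (Re w *\<^sub>R x, Im w *\<^sub>R x) + norm (- Im w *\<^sub>R y, Re w *\<^sub>R y)"
    by (metis norm_triangle_ineq)
  also have "norm (- Im w *\<^sub>R y, Re w *\<^sub>R y) = norm (Re w *\<^sub>R y, - Im w *\<^sub>R y)" by (rule norm_commute)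
  also have "\<dots> = cmod w * norm y"
  proof -
    have "norm (Re w *\<^sub>R y, - Im w *\<^sub>R y) = sqrt (((Re w)\<^sup>2 + (Im w)\<^sup>2) * (norm y)\<^sup>2)"
      by (simp add: norm_Pair power_mult_distrib algebra_simps)
    also have "\<dots> = cmod w * norm y" by (simp add: real_sqrt_mult cmod_def)
    finally show ?thesis .
  qed
  finally have "norm (mulc w v) \<le> cmod w * norm x + cmod w * norm y" using n1 by simp
  also have "\<dots> \<le> cmod w * norm v + cmod w * norm v"
    using norm_fst_le'[of x y] norm_snd_le'[of y x] Pair
    by (intro add_mono mult_left_mono) auto
  finally show ?thesis by simp
qed

lemma no_spec_iff: "z \<notin> op_spectrum B \<longleftrightarrow>
  (\<exists>S. bounded_linear S \<and> (\<forall>v. S (cplx_shift B z v) = v) \<and> (\<forall>v. cplx_shift B z (S v) = v))"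
  unfolding op_spectrum_def by (auto simp: fun_eq_iff)

lemma trivial_spec:
  assumes triv: "\<And>x::'a::real_normed_vector. x = 0" shows "op_spectrum (B :: 'a \<Rightarrow> 'a) = {}"
proof -
  have z: "v = 0" for v :: "'a \<times> 'a"
  proof (cases v)
    case (Pair a b) then show ?thesis using triv[of a] triv[of b] by (simp add: zero_prod_def)
  qed
  have "z \<notin> op_spectrum B" for z unfolding no_spec_iff
    by (rule exI[of _ "\<lambda>v. v"], intro conjI allI bounded_linear_ident) (metis z)+
  then show ?thesis by blast
qed

lemma spec_in:
  fixes B :: "'a::real_normed_vector \<Rightarrow> 'a"
  assumes B: "bounded_linear B" and z: "complex_of_real l \<notin> op_spectrum B"
  shows "\<exists>R. bounded_linear R \<and> (\<forall>x. R (l *\<^sub>R x - B x) = x) \<and> (\<forall>x. l *\<^sub>R R x - B (R x) = x)"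
proof -
  obtain S where S: "bounded_linear S" "\<And>v. S (cplx_shift B (complex_of_real l) v) = v"
    "\<And>v. cplx_shift B (complex_of_real l) (S v) = v"
    using z no_spec_iff by blast
  have B0: "B 0 = 0" using linear_0[OF bounded_linear.linear[OF B]] .
  have sh: "cplx_shift B (complex_of_real l) (x, y) = (B x - l *\<^sub>R x, B y - l *\<^sub>R y)" for x y
    by (simp add: cplx_shift_def)
  define R where "R = (\<lambda>x. - fst (S (x, 0)))"
  have "bounded_linear R" unfolding R_def
    by (intro bounded_linear_minus bounded_linear_compose[OF bounded_linear_fst, unfolded o_def]
        bounded_linear_compose[OF S(1), unfolded o_def] bounded_linear_Pair bounded_linear_ident bounded_linear_zero)
  moreover have "R (l *\<^sub>R x - B x) = x" for x
  proof -
    have "(l *\<^sub>R x - B x, 0::'a) = - cplx_shift B (complex_of_real l) (x, 0)" by (simp add: sh B0)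
    then have "S (l *\<^sub>R x - B x, 0) = - S (cplx_shift B (complex_of_real l) (x, 0))"
      using linear_neg[OF bounded_linear.linear[OF S(1)]] by simp
    then show ?thesis using S(2) by (simp add: R_def)
  qed
  moreover have "l *\<^sub>R R x - B (R x) = x" for x
  proof -
    obtain s1 s2 where s: "S (x, 0) = (s1, s2)" by (cases "S (x, 0)")
    have "cplx_shift B (complex_of_real l) (s1, s2) = (x, 0)" using S(3)[of "(x,0)"] s by simp
    then have "B s1 - l *\<^sub>R s1 = x" by (simp add: sh)
    then show ?thesis using linear_neg[OF bounded_linear.linear[OF B]] linear_0[OF bounded_linear.linear[OF B]] by (simp add: R_def s)
  qed
  ultimately show ?thesis by blast
qed

context oc begin

lemma NBset_ne: assumes "pos B" shows "{m. m > 0 \<and> NB B m} \<noteq> {}" using NB_exists[OF assms] by auto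
lemma NBset_bdd: "bdd_below {m. m > 0 \<and> NB B m}" by (rule bdd_belowI[of _ 0]) auto
lemma rho_nonneg: assumes "pos B" shows "0 \<le> rho B"
  unfolding rho_def by (rule cInf_greatest) (use NBset_ne[OF assms] in auto)
lemma rho_le: "NB B m \<Longrightarrow> m > 0 \<Longrightarrow> rho B \<le> m"
  unfolding rho_def by (rule cInf_lower) (auto intro: NBset_bdd)
lemma rho_lt_ex: "pos B \<Longrightarrow> rho B < l \<Longrightarrow> \<exists>m. 0 < m \<and> m < l \<and> NB B m"
  unfolding rho_def using cInf_lessD[OF NBset_ne] by blast
lemma rho_lt_iff: "pos B \<Longrightarrow> l > 0 \<Longrightarrow> rho B < l \<longleftrightarrow> PP B l"
proof
  assume "pos B" "l > 0" "rho B < l"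
  then show "PP B l" using rho_lt_ex NS by blast
next
  assume B: "pos B" "l > 0" "PP B l"
  then obtain l' where "0 < l'" "l' < l" "PP B l'" using Dn by blast
  then show "rho B < l" using PS[OF B(1)] rho_le by fastforce
qed

lemma pos_add: "pos B \<Longrightarrow> pos C \<Longrightarrow> pos (\<lambda>x. B x + C x)"
  by (auto simp: pos_def intro: bounded_linear_add K_add)
lemma pos_scale: "pos B \<Longrightarrow> 0 \<le> c \<Longrightarrow> pos (\<lambda>x. c *\<^sub>R B x)"
  by (auto simp: pos_def intro: K_scale bounded_linear_compose[OF bounded_linear_scaleR_right, unfolded o_def])
lemma pos_comp: "pos B \<Longrightarrow> pos C \<Longrightarrow> pos (\<lambda>x. B (C x))"
  by (auto simp: pos_def intro: bounded_linear_compose[unfolded o_def])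

lemma NB_dom:
  assumes B: "pos B" and C: "pos C" and le: "\<And>x. x \<in> K \<Longrightarrow> C x - B x \<in> K" and N: "NB C m"
  shows "NB B m"
proof -
  obtain g where g: "g > 0" "\<And>x y. x \<in> K \<Longrightarrow> y - x \<in> K \<Longrightarrow> norm x \<le> g * norm y" using normal by blast
  obtain C0 where C0: "C0 \<ge> 0" "\<And>x n. x \<in> K \<Longrightarrow> norm ((C ^^ n) x) \<le> C0 * m ^ n * norm x"
    using N unfolding NB_def by blast
  have dom: "(C ^^ n) x - (B ^^ n) x \<in> K" if "x \<in> K" for x n
  proof (induction n)
    case 0 then show ?case using K_zero by simp
  next
    case (Suc n)
    have "(C ^^ Suc n) x - (B ^^ Suc n) x = C ((C ^^ n) x - (B ^^ n) x) + (C ((B ^^ n) x) - B ((B ^^ n) x))"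
      using linear_diff[OF pos_lin[OF C]] by simp
    also have "\<dots> \<in> K" using Suc C le pos_funpow[OF B that] unfolding pos_def by (intro K_add) auto
    finally show ?case .
  qed
  have "norm ((B ^^ n) x) \<le> (g * C0) * m ^ n * norm x" if "x \<in> K" for x n
  proof -
    have "norm ((B ^^ n) x) \<le> g * norm ((C ^^ n) x)" using g dom that pos_funpow[OF B] by blast
    also have "\<dots> \<le> g * (C0 * m ^ n * norm x)" using C0 g that by (intro mult_left_mono) auto
    finally show ?thesis by (simp add: algebra_simps)
  qed
  then show ?thesis unfolding NB_def using g C0 by (intro exI[of _ "g * C0"]) auto
qed

lemma rho_mono:
  assumes "pos B" "pos C" "\<And>x. x \<in> K \<Longrightarrow> C x - B x \<in> K"
  shows "rho B \<le> rho C"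
  unfolding rho_def
  by (rule cInf_superset_mono[OF NBset_ne[OF assms(2)] NBset_bdd]) (use NB_dom[OF assms] in auto)

lemma PP_scale:
  assumes "PP B l" "c > 0" "linear B" shows "PP (\<lambda>x. c *\<^sub>R B x) (c * l)"
proof -
  obtain R where R: "bounded_linear R" "\<And>x. R (l *\<^sub>R x - B x) = x" "\<And>x. l *\<^sub>R R x - B (R x) = x" "\<And>x. x \<in> K \<Longrightarrow> R x \<in> K"
    using assms(1) unfolding PP_def by blast
  have linR: "linear R" using R(1) bounded_linear.linear by blast
  define R' where "R' = (\<lambda>x. (1/c) *\<^sub>R R x)"
  have "bounded_linear R'" unfolding R'_def
    using bounded_linear_compose[OF bounded_linear_scaleR_right R(1)] by (simp add: o_def)
  moreover have "R' ((c * l) *\<^sub>R x - c *\<^sub>R B x) = x" for x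
  proof -
    have "(c * l) *\<^sub>R x - c *\<^sub>R B x = c *\<^sub>R (l *\<^sub>R x - B x)" by (simp add: algebra_simps)
    then show ?thesis using R(2) linear_scale[OF linR] assms(2) by (simp add: R'_def)
  qed
  moreover have "(c * l) *\<^sub>R R' x - c *\<^sub>R B (R' x) = x" for x
  proof -
    have "(c * l) *\<^sub>R R' x = l *\<^sub>R R x" using assms(2) by (simp add: R'_def)
    moreover have "c *\<^sub>R B (R' x) = B (R x)" using assms(2) linear_scale[OF assms(3)] by (simp add: R'_def)
    ultimately show ?thesis using R(3) by simp
  qed
  moreover have "R' x \<in> K" if "x \<in> K" for x using R(4) that assms(2) by (simp add: R'_def K_scale)
  ultimately show ?thesis unfolding PP_def by blast
qed

end

lemma mulc_neg: "mulc (- a) v = - mulc a v" by (cases v) (simp add: mulc_def algebra_simps)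
lemma mulc_diff: "mulc w (a - b) = mulc w a - mulc w b" using linear_diff[OF mulc_lin] .
lemma mulc_uminus: "mulc w (- a) = - mulc w a" using linear_neg[OF mulc_lin] .

context oc begin

lemma spec_out:
  assumes B: "pos B" and N: "NB B m" and m: "m > 0" and z: "cmod z > m"
  shows "z \<notin> op_spectrum B"
proof -
  obtain C where C: "C \<ge> 0" "\<And>x n. norm ((B ^^ n) x) \<le> C * m ^ n * norm x" using NB_all[OF B N m] by blast
  have z0: "z \<noteq> 0"
  proof
    assume "z = 0" then show False using z m by simp
  qed
  have cz: "cmod z > 0" using z m by linarith
  have linB: "linear B" using pos_lin[OF B] .
  define E where "E = (\<lambda>v. mulc (1/z) (cx B v))"
  have Bb: "bounded_linear B" using B pos_def by blast
  have E: "bounded_linear E" unfolding E_def using bounded_linear_compose[OF mulc_bl cx_bl[OF Bb]] by (simp add: o_def)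
  have En: "(E ^^ n) v = mulc ((1/z)^n) (cx (B ^^ n) v)" for n v
  proof (induction n)
    case 0 show ?case by (cases v) (simp add: mulc_def cx_def)
  next
    case (Suc n)
    have "(E ^^ Suc n) v = E (mulc ((1/z)^n) (cx (B ^^ n) v))" using Suc by simp
    also have "\<dots> = mulc (1/z) (mulc ((1/z)^n) (cx B (cx (B^^n) v)))" unfolding E_def using mulc_cx[OF linB] by simp
    also have "\<dots> = mulc ((1/z)^Suc n) (cx (B ^^ Suc n) v)" by (simp add: mulc_mult cx_comp o_def)
    finally show ?case .
  qed
  have cxb: "norm (cx (B ^^ n) v) \<le> 2 * (C * m ^ n) * norm v" for n v
  proof (cases v)
    case (Pair x y)
    have "norm (cx (B ^^ n) v) \<le> norm ((B ^^ n) x) + norm ((B ^^ n) y)" by (simp add: Pair cx_def norm_Pair_le)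
    also have "\<dots> \<le> C * m ^ n * norm v + C * m ^ n * norm v"
    proof -
      have cm: "C * m^n \<ge> 0" using C(1) m by simp
      have h1: "C * m^n * norm x \<le> C * m^n * norm v" using mult_left_mono[OF norm_fst_le'[of x y] cm] by (simp add: Pair)
      have h2: "C * m^n * norm y \<le> C * m^n * norm v" using mult_left_mono[OF norm_snd_le'[of y x] cm] by (simp add: Pair)
      show ?thesis using h1 h2 C(2)[of n x] C(2)[of n y] by linarith
    qed
    finally show ?thesis by (simp add: algebra_simps)
  qed
  have bd: "norm ((E ^^ n) v) \<le> (4 * C) * (m / cmod z) ^ n * norm v" for n v
  proof -
    have "norm ((E ^^ n) v) \<le> 2 * cmod ((1/z)^n) * norm (cx (B ^^ n) v)" unfolding En by (rule norm_mulc)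
    also have "\<dots> \<le> 2 * cmod ((1/z)^n) * (2 * (C * m ^ n) * norm v)"
      by (intro mult_left_mono cxb) auto
    also have "\<dots> = (4 * C) * (m / cmod z) ^ n * norm v"
      by (simp add: norm_power norm_divide power_divide)
    finally show ?thesis .
  qed
  have q: "0 \<le> m / cmod z" "m / cmod z < 1" using m z cz by auto
  note N = neumann[OF E q _ bd]
  define S where "S = (\<lambda>v. \<Sum>n. (E ^^ n) v)"
  have S: "bounded_linear S" "\<And>v. S (v - E v) = v" "\<And>v. S v - E (S v) = v"
    using N C(1) unfolding S_def by auto
  define S' where "S' = (\<lambda>w. S (mulc (-1/z) w))"
  have "bounded_linear S'" unfolding S'_def using bounded_linear_compose[OF S(1) mulc_bl] by (simp add: o_def)
  moreover have "S' (cplx_shift B z v) = v" for v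
  proof -
    have "mulc (-1/z) (cplx_shift B z v) = v - E v"
      using z0 by (simp add: shift_eq mulc_diff mulc_mult E_def mulc_neg mulc_one)
    then show ?thesis using S(2) by (simp add: S'_def)
  qed
  moreover have "cplx_shift B z (S' w) = w" for w
  proof -
    define u where "u = mulc (-1/z) w"
    define y where "y = S u"
    have "cx B y = mulc z (E y)" using z0 by (simp add: E_def mulc_mult mulc_one)
    then have "cplx_shift B z y = mulc z (- (y - E y))" by (simp add: shift_eq mulc_diff mulc_uminus)
    also have "\<dots> = - mulc z u" using S(3)[of u] by (simp add: y_def mulc_uminus)
    also have "\<dots> = w" using z0 by (simp add: u_def mulc_mult mulc_neg mulc_one mulc_uminus)
    finally show ?thesis by (simp add: S'_def y_def u_def)
  qed
  ultimately show ?thesis unfolding no_spec_iff by blast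
qed

end

context oc begin

lemma SR:
  assumes nt: "\<exists>x::'a. x \<noteq> 0" and B: "pos B"
  shows "spectral_radius B = rho B"
proof -
  define r where "r = rho B"
  have r0: "r \<ge> 0" using rho_nonneg[OF B] by (simp add: r_def)
  have out: "cmod z \<le> r" if "z \<in> op_spectrum B" for z
  proof (rule ccontr)
    assume "\<not> cmod z \<le> r"
    then obtain m where "0 < m" "m < cmod z" "NB B m" using rho_lt_ex[OF B, of "cmod z"] by (auto simp: r_def)
    then show False using spec_out[OF B] that by blast
  qed
  have Bb: "bounded_linear B" using B pos_def by blast
  have inn: "complex_of_real r \<in> op_spectrum B"
  proof (rule ccontr)
    assume ns: "complex_of_real r \<notin> op_spectrum B"
    obtain R where R: "bounded_linear R" "\<And>x. R (r *\<^sub>R x - B x) = x" "\<And>x. r *\<^sub>R R x - B (R x) = x"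
      using spec_in[OF Bb ns] by blast
    obtain cR where cR: "cR > 0" "\<And>x. norm (R x) \<le> norm x * cR" using bounded_linear.pos_bounded[OF R(1)] by blast
    show False
    proof (cases "r > 0")
      case True
      have Rpos: "R x \<in> K" if x: "x \<in> K" for x
      proof -
        have "R x \<in> closure K"
        proof (rule closure_approachable[THEN iffD2], intro allI impI)
          fix e :: real assume e: "e > 0"
          define d where "d = min (1/(2*cR)) (e / (4 * cR * (norm (R x) + 1)))"
          have nn: "norm (R x) + 1 > 0" using norm_ge_zero[of "R x"] by linarith
          have den: "4 * cR * (norm (R x) + 1) > 0" using cR nn by simp
          have d0: "d > 0" using cR e den by (simp add: d_def)
          have d1: "d * cR \<le> 1/2" using cR by (simp add: d_def min_def field_simps)
          have d2: "2 * (d * cR) * norm (R x) < e"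
          proof -
            have "d \<le> e / (4 * cR * (norm (R x) + 1))" by (simp add: d_def)
            then have "d * (4 * cR * (norm (R x) + 1)) \<le> e" by (rule pos_le_divide_eq[THEN iffD1, OF den])
            moreover have "2 * (d * cR) * norm (R x) < d * (4 * cR * (norm (R x) + 1))"
              using d0 cR by (simp add: field_simps) (smt (verit) mult_pos_pos norm_ge_zero mult_nonneg_nonneg)
            ultimately show ?thesis by linarith
          qed
          define mu where "mu = r + d"
          have "rho B < mu" using d0 by (simp add: mu_def r_def)
          then have "PP B mu" using rho_lt_iff[OF B] d0 True mu_def by auto
          then obtain Rm where Rm: "\<And>x. mu *\<^sub>R Rm x - B (Rm x) = x" "\<And>x. x \<in> K \<Longrightarrow> Rm x \<in> K"
            unfolding PP_def by blast
          define L where "L = (\<lambda>x. r *\<^sub>R x - B x)"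
          have L: "linear L" unfolding L_def using Bb
            by (intro bounded_linear.linear bounded_linear_sub bounded_linear_scaleR_right) auto
          have RL: "\<And>x. R (L x) = x" and LR: "\<And>x. L (R x) = x" using R(2,3) by (simp_all add: L_def)
          have q0: "0 \<le> d * cR" using d0 cR by simp
          have bd: "norm (R ((-d) *\<^sub>R y)) \<le> (d * cR) * norm y" for y
          proof -
            have "R ((-d) *\<^sub>R y) = (-d) *\<^sub>R R y" using linear_scale[OF bounded_linear.linear[OF R(1)]] by blast
            then have "norm (R ((-d) *\<^sub>R y)) = d * norm (R y)" using d0 by simp
            also have "\<dots> \<le> d * (norm y * cR)" using cR(2)[of y] d0 by (intro mult_left_mono) auto
            finally show ?thesis by (simp add: algebra_simps)
          qed
          note PT = pert[OF L R(1) bounded_linear_scaleR_right[of "-d"], of "d * cR", OF RL LR q0 d1 bd]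
          define R' where "R' = (\<lambda>x. \<Sum>n. ((\<lambda>y. R ((-d) *\<^sub>R y)) ^^ n) (R x))"
          have R'inv: "R' (mu *\<^sub>R v - B v) = v" for v
            using PT(2)[of v] unfolding R'_def L_def mu_def by (simp add: algebra_simps)
          have "R' x = Rm x" using R'inv[of "Rm x"] Rm(1)[of x] by simp
          moreover have "norm (R' x - R x) \<le> 2 * (d * cR) * norm (R x)" using PT(4) unfolding R'_def by simp
          ultimately have "dist (Rm x) (R x) < e" using d2 by (simp add: dist_norm)
          then show "\<exists>y\<in>K. dist y (R x) < e" using Rm(2)[OF x] by blast
        qed
        then show ?thesis using K_closed by (simp add: closure_closed)
      qed
      have "PP B r" unfolding PP_def using R Rpos by blast
      then obtain l' where "0 < l'" "l' < r" "PP B l'" using Dn[OF B _ True] by blast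
      then have "rho B \<le> l'" using PS[OF B] rho_le by blast
      then show False using \<open>l' < r\<close> r_def by simp
    next
      case False
      then have r00: "r = 0" using r0 by simp
      obtain x0 where x0: "x0 \<in> K" "x0 \<noteq> 0"
      proof -
        obtain x :: 'a where "x \<noteq> 0" using nt by blast
        moreover obtain u v where "u \<in> K" "v \<in> K" "x = u - v" using K_decomp by blast
        ultimately show ?thesis using that by (cases "u = 0") auto
      qed
      obtain m where m: "0 < m" "m < 1/(2*cR)" "NB B m"
        using rho_lt_ex[OF B, of "1/(2*cR)"] r00 cR by (auto simp: r_def)
      obtain C where C: "C \<ge> 0" "\<And>x n. x \<in> K \<Longrightarrow> norm ((B^^n) x) \<le> C * m^n * norm x"
        using m(3) NB_def by auto
      have Rb: "R (B y) = - y" for y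
        using R(2)[of y] r00 linear_neg[OF bounded_linear.linear[OF R(1)]] by (metis add.inverse_inverse diff_0 scale_zero_left)
      have inv: "norm y \<le> cR ^ n * norm ((B ^^ n) y)" for y n
      proof (induction n arbitrary: y)
        case 0 then show ?case by simp
      next
        case (Suc n)
        have "norm y = norm (R (B y))" using Rb by simp
        also have "\<dots> \<le> norm (B y) * cR" by (rule cR(2))
        also have "\<dots> \<le> cR ^ n * norm ((B ^^ n) (B y)) * cR" using Suc[of "B y"] cR by (intro mult_right_mono) auto
        also have "\<dots> = cR ^ Suc n * norm ((B ^^ Suc n) y)" by (simp add: funpow_swap1 algebra_simps)
        finally show ?case .
      qed
      obtain n where n: "(1/2::real) ^ n < 1 / (C + 1)" using real_arch_pow_inv[of "1/(C+1)" "1/2"] C by auto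
      have "norm x0 \<le> cR ^ n * (C * m ^ n * norm x0)"
        using inv[of x0 n] C(2)[OF x0(1), of n] cR by (meson mult_left_mono order.trans zero_le_power less_imp_le)
      also have "\<dots> = C * (cR * m) ^ n * norm x0" by (simp add: power_mult_distrib algebra_simps)
      also have "\<dots> \<le> C * (1/2) ^ n * norm x0"
      proof -
        have "cR * m \<le> 1/2" using m cR by (simp add: field_simps)
        then have "(cR * m) ^ n \<le> (1/2) ^ n" using m cR by (intro power_mono) auto
        then show ?thesis using C by (intro mult_right_mono mult_left_mono) auto
      qed
      also have "\<dots> < norm x0"
      proof -
        have "C * (1/2) ^ n \<le> C * (1 / (C + 1))" using n C by (intro mult_left_mono) auto
        also have "\<dots> < 1" using C by (simp add: field_simps)
        finally show ?thesis using x0 by simp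
      qed
      finally show False by simp
    qed
  qed
  have "Sup (cmod ` op_spectrum B) = r"
  proof (rule cSup_eq_maximum)
    show "r \<in> cmod ` op_spectrum B" using inn r0 by (metis image_eqI norm_of_real abs_of_nonneg)
    show "\<And>x. x \<in> cmod ` op_spectrum B \<Longrightarrow> x \<le> r" using out by blast
  qed
  then show ?thesis unfolding spectral_radius_def r_def .
qed

end

primrec Mw :: "('a::real_vector \<Rightarrow> 'a) \<Rightarrow> ('a \<Rightarrow> 'a) \<Rightarrow> nat \<Rightarrow> nat \<Rightarrow> 'a \<Rightarrow> 'a" where
  "Mw T F 0 k x = (if k = 0 then x else 0)"
| "Mw T F (Suc n) k x = T (Mw T F n k x) + (if k = 0 then 0 else F (Mw T F n (k - 1) x))"

lemma Mw_big: "linear T \<Longrightarrow> linear F \<Longrightarrow> n < k \<Longrightarrow> Mw T F n k x = 0"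
proof (induction n arbitrary: k)
  case 0 then show ?case by simp
next
  case (Suc n)
  then show ?case using linear_0[OF Suc.prems(1)] linear_0[OF Suc.prems(2)] by simp
qed

lemma Mw_expand:
  assumes T: "linear T" and F: "linear F"
  shows "((\<lambda>x. T x + t *\<^sub>R F x) ^^ n) x = (\<Sum>k\<le>n. t^k *\<^sub>R Mw T F n k x)"
proof (induction n)
  case 0 then show ?case by simp
next
  case (Suc n)
  define S where "S = (\<Sum>k\<le>n. t^k *\<^sub>R Mw T F n k x)"
  have "((\<lambda>x. T x + t *\<^sub>R F x) ^^ Suc n) x = T S + t *\<^sub>R F S" using Suc by (simp add: S_def)
  also have "T S = (\<Sum>k\<le>n. t^k *\<^sub>R T (Mw T F n k x))" unfolding S_def
    by (simp add: linear_sum[OF T] linear_scale[OF T])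
  also have "t *\<^sub>R F S = (\<Sum>k\<le>n. t^(Suc k) *\<^sub>R F (Mw T F n k x))" unfolding S_def
    by (simp add: linear_sum[OF F] linear_scale[OF F] scaleR_sum_right)
  finally have L: "((\<lambda>x. T x + t *\<^sub>R F x) ^^ Suc n) x = (\<Sum>k\<le>n. t^k *\<^sub>R T (Mw T F n k x)) + (\<Sum>k\<le>n. t^(Suc k) *\<^sub>R F (Mw T F n k x))" .
  have "(\<Sum>k\<le>Suc n. t^k *\<^sub>R Mw T F (Suc n) k x)
      = (\<Sum>k\<le>Suc n. t^k *\<^sub>R T (Mw T F n k x)) + (\<Sum>k\<le>Suc n. t^k *\<^sub>R (if k = 0 then 0 else F (Mw T F n (k - 1) x)))"
    by (simp add: scaleR_add_right sum.distrib)
  also have "(\<Sum>k\<le>Suc n. t^k *\<^sub>R T (Mw T F n k x)) = (\<Sum>k\<le>n. t^k *\<^sub>R T (Mw T F n k x))"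
    using Mw_big[OF T F, of n "Suc n" x] linear_0[OF T] by simp
  also have "(\<Sum>k\<le>Suc n. t^k *\<^sub>R (if k = 0 then 0 else F (Mw T F n (k - 1) x))) = (\<Sum>k\<le>n. t^(Suc k) *\<^sub>R F (Mw T F n k x))"
    by (subst sum.atMost_Suc_shift) simp
  finally show ?case using L by simp
qed

lemma powr_pow: "(x::real) > 0 \<Longrightarrow> (x ^ n) powr a = (x powr a) ^ n"
proof -
  assume x: "x > 0"
  have "(x ^ n) powr a = (x powr real n) powr a" using powr_realpow[OF x] by simp
  also have "\<dots> = x powr (a * real n)" by (simp add: powr_powr mult.commute)
  also have "\<dots> = (x powr a) powr real n" by (simp add: powr_powr)
  also have "\<dots> = (x powr a) ^ n" using x by (simp add: powr_realpow)
  finally show ?thesis .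
qed

context oc begin

lemma Mw_pos: "pos T \<Longrightarrow> pos F \<Longrightarrow> x \<in> K \<Longrightarrow> Mw T F n k x \<in> K"
  by (induction n arbitrary: k) (auto simp: pos_def K_zero intro!: K_add)

lemma INT:
  assumes T: "pos T" and F: "pos F" and t0: "t0 > 0" and t1: "t1 > 0" and l0: "l0 > 0" and l1: "l1 > 0"
    and th: "0 \<le> th" "th \<le> 1"
    and N0: "NB (\<lambda>x. T x + t0 *\<^sub>R F x) l0" and N1: "NB (\<lambda>x. T x + t1 *\<^sub>R F x) l1"
  shows "NB (\<lambda>x. T x + (t0 powr (1 - th) * t1 powr th) *\<^sub>R F x) (l0 powr (1 - th) * l1 powr th)"
proof -
  define tt where "tt = t0 powr (1 - th) * t1 powr th"
  define ll where "ll = l0 powr (1 - th) * l1 powr th"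
  have ll: "ll > 0" using l0 l1 by (simp add: ll_def)
  obtain g where g: "g > 0" "\<And>x y. x \<in> K \<Longrightarrow> y - x \<in> K \<Longrightarrow> norm x \<le> g * norm y" using normal by blast
  obtain C0 where C0: "C0 \<ge> 0" "\<And>x n. x \<in> K \<Longrightarrow> norm (((\<lambda>x. T x + t0 *\<^sub>R F x) ^^ n) x) \<le> C0 * l0 ^ n * norm x"
    using N0 unfolding NB_def by blast
  obtain C1 where C1: "C1 \<ge> 0" "\<And>x n. x \<in> K \<Longrightarrow> norm (((\<lambda>x. T x + t1 *\<^sub>R F x) ^^ n) x) \<le> C1 * l1 ^ n * norm x"
    using N1 unfolding NB_def by blast
  have linT: "linear T" and linF: "linear F" using T F pos_lin by auto
  note EX = Mw_expand[OF linT linF]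
  have coef: "tt ^ k / ll ^ n \<le> (1 - th) * (t0 ^ k / l0 ^ n) + th * (t1 ^ k / l1 ^ n)" for k n
  proof -
    have a: "t0 ^ k / l0 ^ n > 0" "t1 ^ k / l1 ^ n > 0" using t0 t1 l0 l1 by auto
    have "(t0 ^ k / l0 ^ n) powr (1 - th) * (t1 ^ k / l1 ^ n) powr th = tt ^ k / ll ^ n"
      using t0 t1 l0 l1 by (simp add: powr_divide powr_pow tt_def ll_def power_mult_distrib)
    moreover have "(t0 ^ k / l0 ^ n) powr (1 - th) * (t1 ^ k / l1 ^ n) powr th \<le> (1 - th) * (t0 ^ k / l0 ^ n) + th * (t1 ^ k / l1 ^ n)"
      by (rule Youngs_inequality_0) (use th a in auto)
    ultimately show ?thesis by simp
  qed
  have "norm (((\<lambda>x. T x + tt *\<^sub>R F x) ^^ n) x) \<le> (g * ((1 - th) * C0 + th * C1)) * ll ^ n * norm x"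
    if x: "x \<in> K" for x n
  proof -
    define u where "u = (1 / ll ^ n) *\<^sub>R ((\<lambda>x. T x + tt *\<^sub>R F x) ^^ n) x"
    define w where "w = ((1 - th) / l0 ^ n) *\<^sub>R ((\<lambda>x. T x + t0 *\<^sub>R F x) ^^ n) x + (th / l1 ^ n) *\<^sub>R ((\<lambda>x. T x + t1 *\<^sub>R F x) ^^ n) x"
    have u: "u = (\<Sum>k\<le>n. (tt ^ k / ll ^ n) *\<^sub>R Mw T F n k x)"
      unfolding u_def EX by (simp add: scaleR_sum_right)
    have w: "w = (\<Sum>k\<le>n. ((1 - th) * (t0 ^ k / l0 ^ n) + th * (t1 ^ k / l1 ^ n)) *\<^sub>R Mw T F n k x)"
      unfolding w_def EX by (simp add: scaleR_sum_right sum.distrib[symmetric] scaleR_add_left)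
    have "u \<in> K" unfolding u using x ll t0 t1 by (intro K_sum K_scale Mw_pos[OF T F]) (auto simp: tt_def)
    moreover have "w - u \<in> K"
    proof -
      have "w - u = (\<Sum>k\<le>n. ((1 - th) * (t0 ^ k / l0 ^ n) + th * (t1 ^ k / l1 ^ n) - tt ^ k / ll ^ n) *\<^sub>R Mw T F n k x)"
        unfolding u w by (simp add: sum_subtractf[symmetric] scaleR_diff_left)
      also have "\<dots> \<in> K" using x coef by (intro K_sum K_scale Mw_pos[OF T F]) auto
      finally show ?thesis .
    qed
    ultimately have "norm u \<le> g * norm w" using g by blast
    also have "norm w \<le> (1 - th) / l0 ^ n * (C0 * l0 ^ n * norm x) + th / l1 ^ n * (C1 * l1 ^ n * norm x)"
    proof -
      have "norm w \<le> norm (((1 - th) / l0 ^ n) *\<^sub>R ((\<lambda>x. T x + t0 *\<^sub>R F x) ^^ n) x) + norm ((th / l1 ^ n) *\<^sub>R ((\<lambda>x. T x + t1 *\<^sub>R F x) ^^ n) x)"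
        unfolding w_def by (rule norm_triangle_ineq)
      also have "\<dots> = (1 - th) / l0 ^ n * norm (((\<lambda>x. T x + t0 *\<^sub>R F x) ^^ n) x) + th / l1 ^ n * norm (((\<lambda>x. T x + t1 *\<^sub>R F x) ^^ n) x)"
        using th l0 l1 by simp
      also have "\<dots> \<le> (1 - th) / l0 ^ n * (C0 * l0 ^ n * norm x) + th / l1 ^ n * (C1 * l1 ^ n * norm x)"
        using th l0 l1 C0(2)[OF x, of n] C1(2)[OF x, of n] by (intro add_mono mult_left_mono) auto
      finally show ?thesis .
    qed
    also have "(1 - th) / l0 ^ n * (C0 * l0 ^ n * norm x) + th / l1 ^ n * (C1 * l1 ^ n * norm x) = ((1 - th) * C0 + th * C1) * norm x"
      using l0 l1 by (simp add: field_simps)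
    finally have "norm u \<le> g * (((1 - th) * C0 + th * C1) * norm x)" using g by (simp add: mult_left_mono)
    moreover have "norm u = norm (((\<lambda>x. T x + tt *\<^sub>R F x) ^^ n) x) / ll ^ n" using ll by (simp add: u_def)
    ultimately show ?thesis using ll by (simp add: field_simps)
  qed
  moreover have "g * ((1 - th) * C0 + th * C1) \<ge> 0" using g C0 C1 th by simp
  ultimately show ?thesis unfolding NB_def tt_def[symmetric] ll_def[symmetric] by blast
qed

end

context oc begin

lemma E12:
  assumes T: "pos T" and G: "pos G" and R: "bounded_linear R" "\<And>x. R (l *\<^sub>R x - T x) = x"
    "\<And>x. l *\<^sub>R R x - T (R x) = x" "\<And>x. x \<in> K \<Longrightarrow> R x \<in> K"
  shows "PP (\<lambda>x. T x + G x) l \<longleftrightarrow> PP (\<lambda>x. G (R x)) 1"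
proof
  assume "PP (\<lambda>x. T x + G x) l"
  then obtain RA where RA: "bounded_linear RA" "\<And>x. RA (l *\<^sub>R x - (T x + G x)) = x"
    "\<And>x. l *\<^sub>R RA x - (T (RA x) + G (RA x)) = x" "\<And>x. x \<in> K \<Longrightarrow> RA x \<in> K"
    unfolding PP_def by blast
  have Gb: "bounded_linear G" using G pos_def by blast
  define Q where "Q = (\<lambda>y. y + G (RA y))"
  have "bounded_linear Q" unfolding Q_def
    by (intro bounded_linear_add bounded_linear_ident bounded_linear_compose[OF Gb RA(1), unfolded o_def])
  moreover have "Q (1 *\<^sub>R y - G (R y)) = y" for y
  proof -
    have h: "l *\<^sub>R R y - (T (R y) + G (R y)) = y - G (R y)" using R(3)[of y] by (simp add: algebra_simps)
    have "RA (y - G (R y)) = R y" using RA(2)[of "R y"] unfolding h .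
    then show ?thesis by (simp add: Q_def)
  qed
  moreover have "1 *\<^sub>R Q y - G (R (Q y)) = y" for y
  proof -
    have "l *\<^sub>R RA y - T (RA y) = Q y" using RA(3)[of y] by (simp add: Q_def algebra_simps)
    then have "R (Q y) = RA y" using R(2)[of "RA y"] by simp
    then show ?thesis by (simp add: Q_def)
  qed
  moreover have "Q y \<in> K" if "y \<in> K" for y using that RA(4) G unfolding Q_def pos_def by (auto intro: K_add)
  ultimately show "PP (\<lambda>x. G (R x)) 1" unfolding PP_def by blast
next
  assume "PP (\<lambda>x. G (R x)) 1"
  then obtain Q where Q: "bounded_linear Q" "\<And>x. Q (1 *\<^sub>R x - G (R x)) = x"
    "\<And>x. 1 *\<^sub>R Q x - G (R (Q x)) = x" "\<And>x. x \<in> K \<Longrightarrow> Q x \<in> K"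
    unfolding PP_def by blast
  define RA where "RA = (\<lambda>y. R (Q y))"
  have "bounded_linear RA" unfolding RA_def using bounded_linear_compose[OF R(1) Q(1)] by (simp add: o_def)
  moreover have "RA (l *\<^sub>R x - (T x + G x)) = x" for x
  proof -
    define u where "u = l *\<^sub>R x - T x"
    have Ru: "R u = x" using R(2) by (simp add: u_def)
    have "l *\<^sub>R x - (T x + G x) = u - G (R u)" using Ru by (simp add: u_def algebra_simps)
    then have "Q (l *\<^sub>R x - (T x + G x)) = u" using Q(2)[of u] by simp
    then show ?thesis using Ru by (simp add: RA_def)
  qed
  moreover have "l *\<^sub>R RA y - (T (RA y) + G (RA y)) = y" for y
  proof -
    have "l *\<^sub>R RA y - T (RA y) = Q y" using R(3)[of "Q y"] by (simp add: RA_def)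
    then have "l *\<^sub>R RA y - (T (RA y) + G (RA y)) = Q y - G (R (Q y))" by (simp add: RA_def algebra_simps)
    then show ?thesis using Q(3)[of y] by simp
  qed
  moreover have "RA y \<in> K" if "y \<in> K" for y using that Q(4) R(4) by (simp add: RA_def)
  ultimately show "PP (\<lambda>x. T x + G x) l" unfolding PP_def by blast
qed

lemma res_cmp:
  assumes T: "pos T" and Rl: "\<And>x. Rl (l *\<^sub>R x - T x) = x" "\<And>x. l *\<^sub>R Rl x - T (Rl x) = x" "linear Rl"
    and R1: "\<And>x. R1 x - T (R1 x) = x" and l: "l > 0"
  shows "Rl x - (1/l) *\<^sub>R R1 x = ((1 - l)/l) *\<^sub>R T (Rl (R1 x))"
proof -
  have linT: "linear T" using pos_lin[OF T] .
  define y where "y = R1 x"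
  define w where "w = Rl y"
  have y: "y - T y = x" using R1 by (simp add: y_def)
  have w: "l *\<^sub>R w - T w = y" using Rl(2) by (simp add: w_def)
  have "T y = l *\<^sub>R T w - T (T w)" using w[symmetric] linear_diff[OF linT] linear_scale[OF linT] by metis
  then have RTy: "Rl (T y) = T w" using Rl(1)[of "T w"] by simp
  have "Rl x = w - T w" using y[symmetric] linear_diff[OF Rl(3), of y "T y"] RTy by (simp add: w_def)
  moreover have "(1/l) *\<^sub>R y = w - (1/l) *\<^sub>R T w"
  proof -
    have "(1/l) *\<^sub>R y = (1/l) *\<^sub>R (l *\<^sub>R w - T w)" using w by simp
    also have "\<dots> = w - (1/l) *\<^sub>R T w" using l by (simp add: scaleR_diff_right)
    finally show ?thesis .
  qed
  ultimately have "Rl x - (1/l) *\<^sub>R y = (1/l - 1) *\<^sub>R T w" by (simp add: algebra_simps)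
  moreover have "1/l - 1 = (1 - l)/l" using l by (simp add: field_simps)
  ultimately show ?thesis by (simp add: y_def w_def)
qed

lemma cmpG:
  assumes T: "pos T" and F: "pos F" and Rl: "\<And>x. Rl (l *\<^sub>R x - T x) = x" "\<And>x. l *\<^sub>R Rl x - T (Rl x) = x" "linear Rl"
    "\<And>x. x \<in> K \<Longrightarrow> Rl x \<in> K"
    and R1: "\<And>x. R1 x - T (R1 x) = x" "\<And>x. x \<in> K \<Longrightarrow> R1 x \<in> K" and l: "l > 0" and x: "x \<in> K"
  shows "l \<le> 1 \<Longrightarrow> F (Rl x) - (1/l) *\<^sub>R F (R1 x) \<in> K"
    "1 \<le> l \<Longrightarrow> (1/l) *\<^sub>R F (R1 x) - F (Rl x) \<in> K"
proof -
  have linF: "linear F" using pos_lin[OF F] .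
  have e: "F (Rl x) - (1/l) *\<^sub>R F (R1 x) = ((1 - l)/l) *\<^sub>R F (T (Rl (R1 x)))"
    using arg_cong[OF res_cmp[OF T Rl(1-3) R1(1) l, of x], of F] linear_diff[OF linF] linear_scale[OF linF] by simp
  have p: "F (T (Rl (R1 x))) \<in> K" using T F Rl(4) R1(2) x unfolding pos_def by blast
  show "l \<le> 1 \<Longrightarrow> F (Rl x) - (1/l) *\<^sub>R F (R1 x) \<in> K" unfolding e using p l by (intro K_scale) auto
  have e2: "(1/l) *\<^sub>R F (R1 x) - F (Rl x) = ((l - 1)/l) *\<^sub>R F (T (Rl (R1 x)))"
    using e by (simp add: algebra_simps) (metis minus_diff_eq scaleR_minus_left minus_divide_left)
  show "1 \<le> l \<Longrightarrow> (1/l) *\<^sub>R F (R1 x) - F (Rl x) \<in> K" unfolding e2 using p l by (intro K_scale) auto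
qed

end

context oc begin

lemma INTc:
  assumes T: "pos T" and F: "pos F" and rT: "rho T < 1" and rA: "rho (\<lambda>x. T x + F x) \<le> 1"
    and s: "0 < s" "s < 1"
  shows "rho (\<lambda>x. T x + s *\<^sub>R F x) < 1"
proof -
  define l0 where "l0 = (rho T + 1) / 2"
  have l0: "rho T < l0" "l0 < 1" "0 < l0" using rT rho_nonneg[OF T] by (auto simp: l0_def)
  obtain R where R: "bounded_linear R" "\<And>x. R (l0 *\<^sub>R x - T x) = x" "\<And>x. l0 *\<^sub>R R x - T (R x) = x" "\<And>x. x \<in> K \<Longrightarrow> R x \<in> K"
    using rho_lt_iff[OF T l0(3)] l0(1) unfolding PP_def by blast
  obtain cR where cR: "cR > 0" "\<And>x. norm (R x) \<le> norm x * cR" using bounded_linear.pos_bounded[OF R(1)] by blast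
  have Fb: "bounded_linear F" using F pos_def by blast
  obtain cF where cF: "cF > 0" "\<And>x. norm (F x) \<le> norm x * cF" using bounded_linear.pos_bounded[OF Fb] by blast
  define t0 where "t0 = 1 / (2 * (cR * cF + 1))"
  have p: "cR * cF > 0" using cR cF by simp
  have t0: "0 < t0" "t0 < 1" "t0 * (cR * cF) \<le> 1/2"
  proof -
    have D: "2 * (cR * cF + 1) > 1" using p by simp
    show "0 < t0" "t0 < 1" using D by (auto simp: t0_def)
    have "t0 * (cR * cF) = (cR * cF) / (2 * (cR * cF + 1))" by (simp add: t0_def)
    also have "\<dots> \<le> 1/2" using p by (simp add: divide_le_eq)
    finally show "t0 * (cR * cF) \<le> 1/2" .
  qed
  define L where "L = (\<lambda>x. l0 *\<^sub>R x - T x)"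
  have L: "linear L" unfolding L_def using T unfolding pos_def
    by (intro bounded_linear.linear bounded_linear_sub bounded_linear_scaleR_right) auto
  have RL: "\<And>x. R (L x) = x" and LR: "\<And>x. L (R x) = x" using R(2,3) by (simp_all add: L_def)
  have E: "bounded_linear (\<lambda>x. t0 *\<^sub>R F x)"
    using bounded_linear_compose[OF bounded_linear_scaleR_right Fb] by (simp add: o_def)
  have q0: "0 \<le> t0 * (cR * cF)" using t0 cR cF by simp
  have bd: "norm (R (t0 *\<^sub>R F y)) \<le> (t0 * (cR * cF)) * norm y" for y
  proof -
    have "R (t0 *\<^sub>R F y) = t0 *\<^sub>R R (F y)" using linear_scale[OF bounded_linear.linear[OF R(1)]] by blast
    then have "norm (R (t0 *\<^sub>R F y)) = t0 * norm (R (F y))" using t0 by simp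
    also have "\<dots> \<le> t0 * (norm (F y) * cR)" using cR(2) t0 by (intro mult_left_mono) auto
    also have "\<dots> \<le> t0 * ((norm y * cF) * cR)" using cF(2)[of y] t0 cR by (intro mult_left_mono mult_right_mono) auto
    finally show ?thesis by (simp add: algebra_simps)
  qed
  note PT = pert[OF L R(1) E, of "t0 * (cR * cF)", OF RL LR q0 t0(3) bd]
  define R' where "R' = (\<lambda>x. \<Sum>n. ((\<lambda>y. R (t0 *\<^sub>R F y)) ^^ n) (R x))"
  have "PP (\<lambda>x. T x + t0 *\<^sub>R F x) l0"
    unfolding PP_def
  proof (intro exI[of _ R'] conjI allI ballI)
    show "bounded_linear R'" using PT(1) unfolding R'_def .
    show "R' (l0 *\<^sub>R x - (T x + t0 *\<^sub>R F x)) = x" for x using PT(2)[of x] unfolding R'_def L_def by (simp add: algebra_simps)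
    show "l0 *\<^sub>R R' x - (T (R' x) + t0 *\<^sub>R F (R' x)) = x" for x using PT(3)[of x] unfolding R'_def L_def by (simp add: algebra_simps)
    show "R' x \<in> K" if "x \<in> K" for x
    proof -
      have it: "((\<lambda>y. R (t0 *\<^sub>R F y)) ^^ n) z \<in> K" if "z \<in> K" for n z
        using that F t0 by (induction n) (auto intro!: R(4) K_scale simp: pos_def less_imp_le)
      show ?thesis unfolding R'_def by (rule K_suminf) (use PT(5) it R(4) that in auto)
    qed
  qed
  have posT0: "pos (\<lambda>x. T x + t0 *\<^sub>R F x)" using pos_add[OF T pos_scale[OF F]] t0 by simp
  have N0: "NB (\<lambda>x. T x + t0 *\<^sub>R F x) l0" using PS[OF posT0 \<open>PP _ l0\<close> l0(3)] .
  define d where "d = min (1/2) (ln s / (2 * ln t0))"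
  have lt0: "ln t0 < 0" using t0 by simp
  have ls: "ln s < 0" using s by simp
  have d: "0 < d" "d \<le> 1/2" "d \<le> ln s / (2 * ln t0)" using lt0 ls by (auto simp: d_def divide_pos_neg divide_neg_neg)
  define th where "th = 1 - d"
  have th: "0 \<le> th" "th \<le> 1" "th > 0" using d by (auto simp: th_def)
  define l1 where "l1 = exp (d * (- ln l0) / (2 * th))"
  have ll0: "ln l0 < 0" using l0 by simp
  have l1: "l1 > 1"
  proof -
    have "d * (- ln l0) > 0" using mult_pos_neg[OF d(1) ll0] by simp
    then have "d * (- ln l0) / (2 * th) > 0" using th by (intro divide_pos_pos) auto
    then show ?thesis unfolding l1_def by simp
  qed
  have posA: "pos (\<lambda>x. T x + F x)" using pos_add[OF T F] .
  have "rho (\<lambda>x. T x + F x) < l1" using rA l1 by simp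
  then obtain m where m: "0 < m" "m < l1" "NB (\<lambda>x. T x + F x) m" using rho_lt_ex[OF posA] by blast
  have N1: "NB (\<lambda>x. T x + 1 *\<^sub>R F x) l1" using NB_mono[OF m(3)] m by simp
  have NI: "NB (\<lambda>x. T x + (t0 powr (1 - th) * 1 powr th) *\<^sub>R F x) (l0 powr (1 - th) * l1 powr th)"
    by (rule INT[OF T F t0(1) _ l0(3) _ th(1,2) N0 N1]) (use l1 in auto)
  define tt where "tt = t0 powr d"
  define ll where "ll = l0 powr d * l1 powr th"
  have NI': "NB (\<lambda>x. T x + tt *\<^sub>R F x) ll" using NI by (simp add: tt_def ll_def th_def)
  have tt: "s < tt"
  proof -
    have "d * (2 * ln t0) \<ge> ln s" using d(3) neg_le_divide_eq[of "2 * ln t0" d "ln s"] lt0 by simp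
    then have "d * ln t0 > ln s" using ls by linarith
    then have "exp (ln s) < exp (d * ln t0)" by simp
    then show ?thesis using s t0 by (simp add: tt_def powr_def)
  qed
  have ll: "ll < 1" "ll > 0"
  proof -
    have "ll = exp (d * ln l0) * exp (th * ln l1)" using l0 l1 by (simp add: ll_def powr_def)
    also have "th * ln l1 = d * (- ln l0) / 2" using th by (simp add: l1_def)
    also have "exp (d * ln l0) * exp (d * (- ln l0) / 2) = exp (d * ln l0 / 2)" by (simp add: exp_add[symmetric])
    finally have "ll = exp (d * ln l0 / 2)" .
    moreover have "d * ln l0 / 2 < 0" using d ll0 by (simp add: mult_pos_neg)
    ultimately show "ll < 1" "ll > 0" by simp_all
  qed
  have posTt: "pos (\<lambda>x. T x + tt *\<^sub>R F x)" using pos_add[OF T pos_scale[OF F]] s tt by simp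
  have posTs: "pos (\<lambda>x. T x + s *\<^sub>R F x)" using pos_add[OF T pos_scale[OF F]] s by simp
  have "rho (\<lambda>x. T x + s *\<^sub>R F x) \<le> rho (\<lambda>x. T x + tt *\<^sub>R F x)"
  proof (rule rho_mono[OF posTs posTt])
    fix x assume "x \<in> K"
    then have "(tt - s) *\<^sub>R F x \<in> K" using F tt by (intro K_scale) (auto simp: pos_def)
    then show "T x + tt *\<^sub>R F x - (T x + s *\<^sub>R F x) \<in> K" by (simp add: algebra_simps)
  qed
  also have "\<dots> \<le> ll" using rho_le[OF NI' ll(2)] .
  finally show ?thesis using ll(1) by simp
qed

end

context oc begin

lemma main_oc:
  assumes nt: "\<exists>x::'a. x \<noteq> 0" and A: "pos A" and T: "pos T" and F: "pos F"
    and AD: "\<And>x. A x = T x + F x" and rT: "spectral_radius T < 1"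
  shows "let R0 = spectral_radius (F \<circ> inv (\<lambda>x. x - T x)); rA = spectral_radius A in
    (R0 \<ge> rA \<and> rA > 1 \<and> \<not> (R0 = 1 \<and> rA = 1) \<and> \<not> (R0 \<le> rA \<and> rA < 1)) \<or>
    (\<not> (R0 \<ge> rA \<and> rA > 1) \<and> (R0 = 1 \<and> rA = 1) \<and> \<not> (R0 \<le> rA \<and> rA < 1)) \<or>
    (\<not> (R0 \<ge> rA \<and> rA > 1) \<and> \<not> (R0 = 1 \<and> rA = 1) \<and> (R0 \<le> rA \<and> rA < 1))"
proof -
  have Aeq: "A = (\<lambda>x. T x + F x)" using AD by auto
  have rT1: "rho T < 1" using rT SR[OF nt T] by simp
  then have "PP T 1" using rho_lt_iff[OF T] by simp
  then obtain R1 where R1: "bounded_linear R1" "\<And>x. R1 (x - T x) = x" "\<And>x. R1 x - T (R1 x) = x" "\<And>x. x \<in> K \<Longrightarrow> R1 x \<in> K"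
    unfolding PP_def by auto
  have R1': "\<And>x. R1 (1 *\<^sub>R x - T x) = x" "\<And>x. 1 *\<^sub>R R1 x - T (R1 x) = x" using R1 by auto
  have invR: "inv (\<lambda>x. x - T x) = R1" by (rule inv_unique_comp) (auto simp: fun_eq_iff R1)
  define G where "G = (\<lambda>x. F (R1 x))"
  have posR1: "pos R1" using R1 pos_def by auto
  have G: "pos G" unfolding G_def using pos_comp[OF F posR1] .
  have R0eq: "spectral_radius (F \<circ> inv (\<lambda>x. x - T x)) = rho G" using SR[OF nt G] invR by (simp add: G_def o_def)
  have rAeq: "spectral_radius A = rho A" using SR[OF nt A] .
  have rA0: "rho A \<ge> 0" using rho_nonneg[OF A] .
  have rTA: "rho T \<le> rho A" by (rule rho_mono[OF T A]) (use F in \<open>simp add: AD pos_def\<close>)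
  have res: "\<exists>Rl. bounded_linear Rl \<and> (\<forall>x. Rl (l *\<^sub>R x - T x) = x) \<and> (\<forall>x. l *\<^sub>R Rl x - T (Rl x) = x) \<and> (\<forall>x\<in>K. Rl x \<in> K)"
    if "rho T < l" "l > 0" for l
    using rho_lt_iff[OF T that(2)] that(1) unfolding PP_def by blast
  have linG: "linear G" using pos_lin[OF G] .
  have scaleG: "(\<lambda>x. c *\<^sub>R ((1/c) *\<^sub>R G x)) = G" if "c > 0" for c using that by (simp add: fun_eq_iff)
  have posGs: "pos (\<lambda>x. c *\<^sub>R G x)" if "c \<ge> 0" for c using pos_scale[OF G that] .
  have GAeq: "PP A l \<longleftrightarrow> PP (\<lambda>x. F (Rl x)) 1"
    if "bounded_linear Rl" "\<And>x. Rl (l *\<^sub>R x - T x) = x" "\<And>x. l *\<^sub>R Rl x - T (Rl x) = x" "\<And>x. x \<in> K \<Longrightarrow> Rl x \<in> K" for Rl l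
    unfolding Aeq by (rule E12[OF T F that])
  have c1: "rho G \<le> rho A" if lt: "rho A < 1"
  proof (rule dense_ge_bounded[OF lt])
    fix l assume l: "rho A < l" "l < 1"
    have l0: "l > 0" using l rA0 by simp
    have "PP A l" using rho_lt_iff[OF A l0] l by simp
    obtain Rl where Rl: "bounded_linear Rl" "\<And>x. Rl (l *\<^sub>R x - T x) = x" "\<And>x. l *\<^sub>R Rl x - T (Rl x) = x" "\<And>x. x \<in> K \<Longrightarrow> Rl x \<in> K"
      using res[of l] rTA l l0 by auto
    have "PP (\<lambda>x. F (Rl x)) 1" using GAeq[OF Rl] \<open>PP A l\<close> by simp
    moreover have posFR: "pos (\<lambda>x. F (Rl x))" using pos_comp[OF F] Rl pos_def by auto
    ultimately have "rho (\<lambda>x. F (Rl x)) < 1" using rho_lt_iff[OF posFR, of 1] by simp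
    moreover have "rho (\<lambda>x. (1/l) *\<^sub>R G x) \<le> rho (\<lambda>x. F (Rl x))"
      by (rule rho_mono[OF posGs posFR]) (use cmpG(1)[OF T F Rl(2,3) bounded_linear.linear[OF Rl(1)] Rl(4) R1(3,4) l0] l l0 in \<open>auto simp: G_def\<close>)
    ultimately have r: "rho (\<lambda>x. (1/l) *\<^sub>R G x) < 1" by linarith
    have "PP (\<lambda>x. (1/l) *\<^sub>R G x) 1" using rho_lt_iff[OF posGs[of "1/l"], of 1] l0 r by simp
    then have "PP (\<lambda>x. l *\<^sub>R ((1/l) *\<^sub>R G x)) (l * 1)"
      by (rule PP_scale[OF _ l0]) (use pos_lin[OF posGs[of "1/l"]] l0 in auto)
    then have "PP G l" using scaleG[OF l0] by simp
    then show "rho G \<le> l" using rho_lt_iff[OF G l0] by simp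
  qed
  have c2: "rho A \<le> rho G" if gt: "1 < rho A"
  proof (rule dense_le_bounded[OF gt])
    fix l assume l: "1 < l" "l < rho A"
    have l0: "l > 0" using l by simp
    show "l \<le> rho G"
    proof (rule ccontr)
      assume "\<not> l \<le> rho G"
      then have "PP G l" using rho_lt_iff[OF G l0] by simp
      then have "PP (\<lambda>x. (1/l) *\<^sub>R G x) ((1/l) * l)" by (rule PP_scale) (use l0 linG in auto)
      then have "PP (\<lambda>x. (1/l) *\<^sub>R G x) 1" using l0 by simp
      then have r1: "rho (\<lambda>x. (1/l) *\<^sub>R G x) < 1" using rho_lt_iff[OF posGs[of "1/l"], of 1] l0 by simp
      obtain Rl where Rl: "bounded_linear Rl" "\<And>x. Rl (l *\<^sub>R x - T x) = x" "\<And>x. l *\<^sub>R Rl x - T (Rl x) = x" "\<And>x. x \<in> K \<Longrightarrow> Rl x \<in> K"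
        using res[of l] rT1 l l0 by auto
      have posFR: "pos (\<lambda>x. F (Rl x))" using pos_comp[OF F] Rl pos_def by auto
      have "rho (\<lambda>x. F (Rl x)) \<le> rho (\<lambda>x. (1/l) *\<^sub>R G x)"
        by (rule rho_mono[OF posFR posGs]) (use cmpG(2)[OF T F Rl(2,3) bounded_linear.linear[OF Rl(1)] Rl(4) R1(3,4) l0] l l0 in \<open>auto simp: G_def\<close>)
      then have "rho (\<lambda>x. F (Rl x)) < 1" using r1 by linarith
      then have "PP (\<lambda>x. F (Rl x)) 1" using rho_lt_iff[OF posFR, of 1] by simp
      then have "PP A l" using GAeq[OF Rl] by simp
      then have "rho A < l" using rho_lt_iff[OF A l0] by simp
      then show False using l by simp
    qed
  qed
  have c3a: "1 \<le> rho G" if eq: "rho A = 1"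
  proof (rule ccontr)
    assume "\<not> 1 \<le> rho G"
    then have "PP G 1" using rho_lt_iff[OF G, of 1] by simp
    then have "PP A 1" using GAeq[OF R1(1) R1' R1(4)] by (simp add: G_def)
    then have "rho A < 1" using rho_lt_iff[OF A, of 1] by simp
    then show False using eq by simp
  qed
  have c3b: "rho G \<le> 1" if eq: "rho A = 1"
  proof (rule dense_ge_bounded[of 1 2])
    fix w :: real assume w: "1 < w" "w < 2"
    define s where "s = 1 / w"
    have s: "0 < s" "s < 1" using w by (auto simp: s_def)
    have rAle: "rho (\<lambda>x. T x + F x) \<le> 1" using eq Aeq by simp
    have "rho (\<lambda>x. T x + s *\<^sub>R F x) < 1" by (rule INTc[OF T F rT1 rAle s])
    moreover have posTs: "pos (\<lambda>x. T x + s *\<^sub>R F x)" using pos_add[OF T pos_scale[OF F]] s by simp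
    ultimately have "PP (\<lambda>x. T x + s *\<^sub>R F x) 1" using rho_lt_iff[OF posTs, of 1] by simp
    moreover have posFs: "pos (\<lambda>x. s *\<^sub>R F x)" using pos_scale[OF F] s by simp
    ultimately have "PP (\<lambda>x. s *\<^sub>R F (R1 x)) 1" using E12[OF T posFs R1(1) R1' R1(4)] by simp
    then have "PP (\<lambda>x. w *\<^sub>R (s *\<^sub>R F (R1 x))) (w * 1)"
      by (rule PP_scale) (use w pos_lin[OF pos_comp[OF posFs posR1]] in auto)
    moreover have "(\<lambda>x. w *\<^sub>R (s *\<^sub>R F (R1 x))) = G" using w by (simp add: fun_eq_iff s_def G_def)
    ultimately have "PP G w" by simp
    then show "rho G \<le> w" using rho_lt_iff[OF G, of w] w by simp
  qed simp
  have fin: "(rho G \<ge> rho A \<and> rho A > 1 \<and> \<not> (rho G = 1 \<and> rho A = 1) \<and> \<not> (rho G \<le> rho A \<and> rho A < 1)) \<or>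
    (\<not> (rho G \<ge> rho A \<and> rho A > 1) \<and> (rho G = 1 \<and> rho A = 1) \<and> \<not> (rho G \<le> rho A \<and> rho A < 1)) \<or>
    (\<not> (rho G \<ge> rho A \<and> rho A > 1) \<and> \<not> (rho G = 1 \<and> rho A = 1) \<and> (rho G \<le> rho A \<and> rho A < 1))"
  proof (cases "rho A < 1")
    case True then show ?thesis using c1 by auto
  next
    case False
    show ?thesis
    proof (cases "rho A = 1")
      case True then show ?thesis using c3a c3b by auto
    next
      case False
      then have "1 < rho A" using \<open>\<not> rho A < 1\<close> by simp
      then show ?thesis using c2 by auto
    qed
  qed
  then show ?thesis unfolding Let_def R0eq rAeq .
qed

end

theorem theorem3p2:
  fixes K :: "'a::banach set" and A T F :: "'a \<Rightarrow> 'a"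
  assumes "is_cone K" and "generating_cone K" and "normal_cone K"
    and "bounded_linear A" and "A ` K \<subseteq> K"
    and "bounded_linear T" and "bounded_linear F"
    and "T ` K \<subseteq> K" and "F ` K \<subseteq> K"
    and "\<And>x. A x = T x + F x"
    and "spectral_radius T < 1"
  shows "let R0 = spectral_radius (F \<circ> inv (\<lambda>x. x - T x)); rA = spectral_radius A in
    (R0 \<ge> rA \<and> rA > 1 \<and> \<not> (R0 = 1 \<and> rA = 1) \<and> \<not> (R0 \<le> rA \<and> rA < 1)) \<or>
    (\<not> (R0 \<ge> rA \<and> rA > 1) \<and> (R0 = 1 \<and> rA = 1) \<and> \<not> (R0 \<le> rA \<and> rA < 1)) \<or>
    (\<not> (R0 \<ge> rA \<and> rA > 1) \<and> \<not> (R0 = 1 \<and> rA = 1) \<and> (R0 \<le> rA \<and> rA < 1))"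
proof (cases "\<exists>x::'a. x \<noteq> 0")
  case True
  interpret KK: oc K using assms(1,2,3) by (simp add: oc_def)
  have pA: "KK.pos A" using assms(4,5) by (auto simp: KK.pos_def)
  have pT: "KK.pos T" using assms(6,8) by (auto simp: KK.pos_def)
  have pF: "KK.pos F" using assms(7,9) by (auto simp: KK.pos_def)
  show ?thesis by (rule KK.main_oc[OF True pA pT pF assms(10) assms(11)])
next
  case False
  then have z: "\<And>x::'a. x = 0" by auto
  have eq: "spectral_radius (F \<circ> inv (\<lambda>x. x - T x)) = spectral_radius A"
    unfolding spectral_radius_def using trivial_spec[OF z] by simp
  show ?thesis unfolding Let_def eq
    by (cases rule: linorder_cases[of "spectral_radius A" 1]) auto
qed

end
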